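(* Let $d\ge1$ and let $LG(d,2d)$ be the Lagrangian Grassmannian of $d$-dimensional isotropic subspaces of $\mathbb C^{2d}$ equipped with a symplectic form. Let $U,V,W\in LG(d,2d)$ be pairwise in general position, i.e. $U\cap V=U\cap W=V\cap W=0$. Then there is a unique morphism $f\colon\mathbb P^1\to LG(d,2d)$ of degree $d$ with $f(0)=U$, $f(1)=V$, $f(\infty)=W$.
   Context: The degree of a morphism $f\colon\mathbb P^1\to LG(d,2d)$ is $\int f_*[\mathbb P^1]\cdot\sigma_1$, where $\sigma_1$ is the class of the Schubert divisor (the restriction of the Schubert divisor class of the ambient Grassmannian $G(d,2d)$). *)

theory Defs
  imports "HOL-Analysis.Analysis" "HOL-Computational_Algebra.Polynomial"
begin

definition cvec :: "nat \<Rightarrow> (nat \<Rightarrow> complex) set" where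
  "cvec n = {v. \<forall>i\<ge>n. v i = 0}"

definition detn :: "nat \<Rightarrow> (nat \<Rightarrow> nat \<Rightarrow> complex) \<Rightarrow> complex" where
  "detn n A = (\<Sum>p\<in>{p. p permutes {0..<n}}. of_int (sign p) * (\<Prod>i<n. A i (p i)))"

definition bform :: "nat \<Rightarrow> (nat \<Rightarrow> nat \<Rightarrow> complex) \<Rightarrow> (nat \<Rightarrow> complex) \<Rightarrow> (nat \<Rightarrow> complex) \<Rightarrow> complex" where
  "bform n om u v = (\<Sum>i<n. \<Sum>j<n. u i * om i j * v j)"

definition symplectic_form :: "nat \<Rightarrow> (nat \<Rightarrow> nat \<Rightarrow> complex) \<Rightarrow> bool" where
  "symplectic_form n om \<longleftrightarrow> (\<forall>i<n. om i i = 0) \<and> (\<forall>i<n. \<forall>j<n. om j i = - om i j)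
      \<and> detn n om \<noteq> 0"

definition lincomb :: "nat \<Rightarrow> (nat \<Rightarrow> complex) \<Rightarrow> (nat \<Rightarrow> nat \<Rightarrow> complex) \<Rightarrow> (nat \<Rightarrow> complex)" where
  "lincomb k c b = (\<lambda>i. \<Sum>j<k. c j * b j i)"

definition is_basis :: "nat \<Rightarrow> nat \<Rightarrow> (nat \<Rightarrow> complex) set \<Rightarrow> (nat \<Rightarrow> nat \<Rightarrow> complex) \<Rightarrow> bool" where
  "is_basis n k W b \<longleftrightarrow> (\<forall>j<k. b j \<in> cvec n)
     \<and> W = {v. \<exists>c. v = lincomb k c b}
     \<and> (\<forall>c. lincomb k c b = (\<lambda>_. 0) \<longrightarrow> (\<forall>j<k. c j = 0))"

definition in_LG :: "nat \<Rightarrow> (nat \<Rightarrow> nat \<Rightarrow> complex) \<Rightarrow> (nat \<Rightarrow> complex) set \<Rightarrow> bool" where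
  "in_LG d om W \<longleftrightarrow> (\<exists>b. is_basis (2*d) d W b) \<and> (\<forall>u\<in>W. \<forall>v\<in>W. bform (2*d) om u v = 0)"

definition plucker :: "nat \<Rightarrow> (nat \<Rightarrow> nat \<Rightarrow> complex) \<Rightarrow> nat set \<Rightarrow> complex" where
  "plucker d b I = detn d (\<lambda>r j. b j (sorted_list_of_set I ! r))"

definition psubsets :: "nat \<Rightarrow> nat set set" where
  "psubsets d = {I. I \<subseteq> {0..<2*d} \<and> card I = d}"

text \<open>Points of P^1: None = infinity, Some z = [1:z]. The point [s:t] (s,t not both 0).\<close>
definition p1pt :: "complex \<Rightarrow> complex \<Rightarrow> complex option" where
  "p1pt s t = (if s = 0 then None else Some (t / s))"

definition hom_eval :: "nat \<Rightarrow> complex poly \<Rightarrow> complex \<Rightarrow> complex \<Rightarrow> complex" where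
  "hom_eval e p s t = (\<Sum>k\<le>e. coeff p k * s ^ (e - k) * t ^ k)"

text \<open>f : P^1 -> G(d,2d) is a morphism of degree e: its Plucker coordinates are given by
  binary forms of degree e without common zero (the Schubert class sigma_1 is the
  hyperplane class of the Plucker embedding).\<close>
definition grass_morphism_deg :: "nat \<Rightarrow> (complex option \<Rightarrow> (nat \<Rightarrow> complex) set) \<Rightarrow> nat \<Rightarrow> bool" where
  "grass_morphism_deg d f e \<longleftrightarrow>
     (\<exists>P :: nat set \<Rightarrow> complex poly.
        (\<forall>I. degree (P I) \<le> e)
      \<and> (\<forall>s t. (s, t) \<noteq> (0, 0) \<longrightarrow> (\<exists>I\<in>psubsets d. hom_eval e (P I) s t \<noteq> 0))
      \<and> (\<forall>s t. (s, t) \<noteq> (0, 0) \<longrightarrow>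
           (\<exists>b. is_basis (2*d) d (f (p1pt s t)) b \<and>
                (\<forall>I\<in>psubsets d. plucker d b I = hom_eval e (P I) s t))))"

definition LG_morphism_deg :: "nat \<Rightarrow> (nat \<Rightarrow> nat \<Rightarrow> complex) \<Rightarrow> (complex option \<Rightarrow> (nat \<Rightarrow> complex) set) \<Rightarrow> nat \<Rightarrow> bool" where
  "LG_morphism_deg d om f e \<longleftrightarrow> grass_morphism_deg d f e \<and> (\<forall>x. in_LG d om (f x))"

end

theory Submission
  imports Defs "Jordan_Normal_Form.Determinant"
begin

lemma poly_as_sum_le:
  fixes p :: "complex poly"
  assumes "degree p \<le> e"
  shows "poly p x = (\<Sum>k\<le>e. coeff p k * x ^ k)"
proof -
  have "poly p x = (\<Sum>k\<le>degree p. coeff p k * x ^ k)" by (rule poly_altdef)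
  also have "\<dots> = (\<Sum>k\<le>e. coeff p k * x ^ k)"
    by (rule sum.mono_neutral_left) (use assms le_degree in force)+
  finally show ?thesis .
qed

lemma hom_eval_nz:
  assumes "degree p \<le> e" "s \<noteq> 0"
  shows "hom_eval e p s t = s ^ e * poly p (t / s)"
proof -
  have "s ^ e * poly p (t / s) = (\<Sum>k\<le>e. s ^ e * (coeff p k * (t/s) ^ k))"
    by (simp add: poly_as_sum_le[OF assms(1)] sum_distrib_left)
  also have "\<dots> = (\<Sum>k\<le>e. coeff p k * s ^ (e - k) * t ^ k)"
  proof (rule sum.cong)
    fix k assume "k \<in> {..e}"
    then have "s ^ e = s ^ (e - k) * s ^ k" by (simp add: power_add[symmetric])
    then show "s ^ e * (coeff p k * (t/s) ^ k) = coeff p k * s ^ (e - k) * t ^ k"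
      using assms(2) by (simp add: power_divide field_simps)
  qed simp
  finally show ?thesis by (simp add: hom_eval_def)
qed

lemma hom_eval_z: "hom_eval e p 0 t = coeff p e * t ^ e"
proof -
  have "hom_eval e p 0 t = (\<Sum>k\<in>{e}. coeff p k * 0 ^ (e - k) * t ^ k)"
    unfolding hom_eval_def by (rule sum.mono_neutral_right) auto
  then show ?thesis by simp
qed

lemma hom_eval_1: "degree p \<le> e \<Longrightarrow> hom_eval e p 1 z = poly p z"
  using hom_eval_nz[of p e 1 z] by simp

lemma hom_eval_01: "hom_eval e p 0 1 = coeff p e"
  by (simp add: hom_eval_z)

lemma hom_eval_add: "hom_eval e (p + q) s t = hom_eval e p s t + hom_eval e q s t"
  by (simp add: hom_eval_def algebra_simps sum.distrib)

lemma hom_eval_smult: "hom_eval e (Polynomial.smult a p) s t = a * hom_eval e p s t"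
  by (simp add: hom_eval_def algebra_simps sum_distrib_left)

lemma hom_eval_sum: "hom_eval e (\<Sum>i\<in>S. p i) s t = (\<Sum>i\<in>S. hom_eval e (p i) s t)"
proof (induction S rule: infinite_finite_induct)
  case (insert x F)
  then show ?case by (simp add: hom_eval_add)
qed (simp_all add: hom_eval_def)

lemma coeff_mult_top:
  assumes "degree p \<le> m" "degree q \<le> n"
  shows "coeff (p * q) (m + n) = coeff p m * coeff q n"
proof -
  have "coeff (p * q) (m + n) = (\<Sum>i\<le>m+n. coeff p i * coeff q (m + n - i))"
    by (simp add: coeff_mult)
  also have "\<dots> = (\<Sum>i\<in>{m}. coeff p i * coeff q (m + n - i))"
  proof (rule sum.mono_neutral_right)
    show "\<forall>i\<in>{..m + n} - {m}. coeff p i * coeff q (m + n - i) = 0"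
    proof
      fix i assume "i \<in> {..m + n} - {m}"
      then have "i > m \<or> m + n - i > n" by auto
      then show "coeff p i * coeff q (m + n - i) = 0"
        using assms by (auto simp: coeff_eq_0)
    qed
  qed auto
  finally show ?thesis by simp
qed

lemma hom_eval_mult:
  assumes "degree p \<le> m" "degree q \<le> n"
  shows "hom_eval (m + n) (p * q) s t = hom_eval m p s t * hom_eval n q s t"
proof (cases "s = 0")
  case True
  then show ?thesis using coeff_mult_top[OF assms] by (simp add: hom_eval_z power_add)
next
  case False
  have "degree (p * q) \<le> m + n" using assms
    by (meson add_le_mono degree_mult_le order_trans)
  then show ?thesis using False assms by (simp add: hom_eval_nz power_add)
qed

lemma hom_eval_prod:
  assumes "finite S" "\<And>i. i \<in> S \<Longrightarrow> degree (L i) \<le> 1"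
  shows "hom_eval (card S) (\<Prod>i\<in>S. L i) s t = (\<Prod>i\<in>S. hom_eval 1 (L i) s t)
     \<and> degree (\<Prod>i\<in>S. L i) \<le> card S"
  using assms
proof (induction S rule: finite_induct)
  case empty
  then show ?case by (simp add: hom_eval_def)
next
  case (insert x F)
  then have IH: "hom_eval (card F) (prod L F) s t = (\<Prod>i\<in>F. hom_eval 1 (L i) s t)"
     "degree (prod L F) \<le> card F" by auto
  have dx: "degree (L x) \<le> 1" using insert by auto
  have "hom_eval (card (insert x F)) (prod L (insert x F)) s t
      = hom_eval (1 + card F) (L x * prod L F) s t" using insert by simp
  also have "\<dots> = hom_eval 1 (L x) s t * hom_eval (card F) (prod L F) s t"
    by (rule hom_eval_mult[OF dx IH(2)])
  finally have 1: "hom_eval (card (insert x F)) (prod L (insert x F)) s t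
      = (\<Prod>i\<in>insert x F. hom_eval 1 (L i) s t)" using IH insert by simp
  have "degree (prod L (insert x F)) \<le> card (insert x F)"
  proof -
    have "degree (L x * prod L F) \<le> degree (L x) + degree (prod L F)" by (rule degree_mult_le)
    then have "degree (L x * prod L F) \<le> 1 + card F" using dx IH(2) by linarith
    then show ?thesis using insert.hyps by simp
  qed
  with 1 show ?case by simp
qed

lemma hom_eval_lin: "hom_eval 1 [:x, y:] s t = s * x + t * y"
  by (simp add: hom_eval_def)

abbreviation jdet :: "'a::comm_ring_1 mat \<Rightarrow> 'a" where "jdet \<equiv> Determinant.det"

definition mk :: "nat \<Rightarrow> (nat \<Rightarrow> nat \<Rightarrow> 'a) \<Rightarrow> 'a mat" where
  "mk n A = Matrix.mat n n (\<lambda>(i,j). A i j)"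

lemma mk_carrier[simp]: "mk n A \<in> carrier_mat n n" by (simp add: mk_def)
lemma mk_index[simp]: "i < n \<Longrightarrow> j < n \<Longrightarrow> mk n A $$ (i,j) = A i j" by (simp add: mk_def)
lemma mk_dim[simp]: "dim_row (mk n A) = n" "dim_col (mk n A) = n" by (simp_all add: mk_def)

lemma detn_mk: "detn n A = jdet (mk n A)"
  unfolding detn_def det_def mk_def by (simp add: atLeast0LessThan)

lemma mk_mult: "mk n (\<lambda>i j. \<Sum>l<n. A i l * B l j) = mk n A * mk n B"
  by (rule eq_matI) (auto simp: scalar_prod_def atLeast0LessThan row_def col_def)

lemma detn_mult: "detn n (\<lambda>i j. \<Sum>l<n. A i l * B l j) = detn n A * detn n B"
  by (simp add: detn_mk mk_mult det_mult[OF mk_carrier mk_carrier])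

lemma detn_cong: "(\<And>i j. i < n \<Longrightarrow> j < n \<Longrightarrow> A i j = B i j) \<Longrightarrow> detn n A = detn n B"
proof -
  assume "\<And>i j. i < n \<Longrightarrow> j < n \<Longrightarrow> A i j = B i j"
  then have "mk n A = mk n B" by (intro eq_matI) auto
  then show ?thesis by (simp add: detn_mk)
qed

lemma detn_rows_eq:
  assumes "r1 < n" "r2 < n" "r1 \<noteq> r2" "\<And>j. A r1 j = A r2 j"
  shows "detn n A = 0"
proof -
  have "row (mk n A) r1 = row (mk n A) r2"
    using assms by (intro eq_vecI) auto
  then show ?thesis unfolding detn_mk
    by (rule det_identical_rows[OF mk_carrier assms(3) assms(1) assms(2)])
qed

lemma detn_expand:
  fixes Z :: "nat \<Rightarrow> nat \<Rightarrow> complex" and b :: "nat \<Rightarrow> nat \<Rightarrow> complex"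
  shows "detn d (\<lambda>r j. \<Sum>l<n. Z r l * b j l)
    = (\<Sum>k\<in>PiE {..<d} (\<lambda>_. {..<n}). (\<Prod>r<d. Z r (k r)) * detn d (\<lambda>r j. b j (k r)))"
proof -
  let ?K = "PiE {..<d} (\<lambda>_. {..<n})"
  let ?P = "{p. p permutes {0..<d}}"
  have "detn d (\<lambda>r j. \<Sum>l<n. Z r l * b j l)
      = (\<Sum>p\<in>?P. of_int (sign p) * (\<Prod>r<d. \<Sum>l<n. Z r l * b (p r) l))"
    by (simp add: detn_def)
  also have "\<dots> = (\<Sum>p\<in>?P. of_int (sign p) * (\<Sum>k\<in>?K. (\<Prod>r<d. Z r (k r)) * (\<Prod>r<d. b (p r) (k r))))"
    by (simp add: prod_sum_PiE prod.distrib)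
  also have "\<dots> = (\<Sum>p\<in>?P. \<Sum>k\<in>?K. (\<Prod>r<d. Z r (k r)) * (of_int (sign p) * (\<Prod>r<d. b (p r) (k r))))"
    by (simp add: sum_distrib_left algebra_simps)
  also have "\<dots> = (\<Sum>k\<in>?K. \<Sum>p\<in>?P. (\<Prod>r<d. Z r (k r)) * (of_int (sign p) * (\<Prod>r<d. b (p r) (k r))))"
    by (rule sum.swap)
  also have "\<dots> = (\<Sum>k\<in>?K. (\<Prod>r<d. Z r (k r)) * detn d (\<lambda>r j. b j (k r)))"
    by (simp add: detn_def sum_distrib_left)
  finally show ?thesis .
qed

definition INJ :: "nat \<Rightarrow> nat \<Rightarrow> (nat \<Rightarrow> nat) set" where
  "INJ d n = {k \<in> PiE {..<d} (\<lambda>_. {..<n}). inj_on k {..<d}}"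

definition eps :: "nat \<Rightarrow> (nat \<Rightarrow> nat) \<Rightarrow> complex" where
  "eps d k = detn d (\<lambda>r m. if sorted_list_of_set (k ` {..<d}) ! m = k r then 1 else 0)"

lemma detn_inj_rows:
  fixes b :: "nat \<Rightarrow> nat \<Rightarrow> complex"
  assumes "inj_on k {..<d}"
  shows "detn d (\<lambda>r j. b j (k r)) = eps d k * plucker d b (k ` {..<d})"
proof -
  let ?S = "k ` {..<d}"
  let ?L = "sorted_list_of_set ?S"
  have fin: "finite ?S" by simp
  have len: "length ?L = d" using assms by (simp add: card_image)
  have dist: "distinct ?L" by simp
  have setL: "set ?L = ?S" by simp
  have key: "(\<Sum>m<d. (if ?L ! m = k r then 1 else 0) * b j (?L ! m)) = b j (k r)"
    if r: "r < d" for r j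
  proof -
    have "k r \<in> set ?L" using r setL by auto
    then obtain m0 where m0: "m0 < d" "?L ! m0 = k r" using len by (metis in_set_conv_nth)
    have "(\<Sum>m<d. (if ?L ! m = k r then 1 else 0) * b j (?L ! m))
        = (\<Sum>m\<in>{m0}. (if ?L ! m = k r then 1 else 0) * b j (?L ! m))"
    proof (rule sum.mono_neutral_right)
      show "\<forall>m\<in>{..<d} - {m0}. (if ?L ! m = k r then 1 else 0) * b j (?L ! m) = 0"
      proof
        fix m assume "m \<in> {..<d} - {m0}"
        then have "m < d" "m \<noteq> m0" by auto
        then have "?L ! m \<noteq> ?L ! m0" using dist len m0 nth_eq_iff_index_eq[OF dist, of m m0] by simp
        then show "(if ?L ! m = k r then 1 else 0) * b j (?L ! m) = 0" using m0 by auto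
      qed
    qed (use m0 in auto)
    then show ?thesis using m0 by simp
  qed
  have "detn d (\<lambda>r j. b j (k r))
      = detn d (\<lambda>r j. \<Sum>m<d. (if ?L ! m = k r then 1 else 0) * b j (?L ! m))"
    by (rule detn_cong) (simp add: key)
  also have "\<dots> = eps d k * plucker d b ?S"
    unfolding eps_def plucker_def by (rule detn_mult)
  finally show ?thesis .
qed

lemma detn_noninj_rows:
  fixes b :: "nat \<Rightarrow> nat \<Rightarrow> complex"
  assumes "\<not> inj_on k {..<d}"
  shows "detn d (\<lambda>r j. b j (k r)) = 0"
proof -
  obtain r1 r2 where "r1 < d" "r2 < d" "r1 \<noteq> r2" "k r1 = k r2"
    using assms unfolding inj_on_def by auto
  then show ?thesis by (intro detn_rows_eq[of r1 d r2]) auto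
qed

lemma cauchy_binet:
  fixes Z :: "nat \<Rightarrow> nat \<Rightarrow> complex" and b :: "nat \<Rightarrow> nat \<Rightarrow> complex"
  shows "detn d (\<lambda>r j. \<Sum>l<n. Z r l * b j l)
    = (\<Sum>k\<in>INJ d n. (\<Prod>r<d. Z r (k r)) * eps d k * plucker d b (k ` {..<d}))"
proof -
  have "detn d (\<lambda>r j. \<Sum>l<n. Z r l * b j l)
    = (\<Sum>k\<in>PiE {..<d} (\<lambda>_. {..<n}). (\<Prod>r<d. Z r (k r)) * detn d (\<lambda>r j. b j (k r)))"
    by (rule detn_expand)
  also have "\<dots> = (\<Sum>k\<in>INJ d n. (\<Prod>r<d. Z r (k r)) * detn d (\<lambda>r j. b j (k r)))"
    unfolding INJ_def
    by (rule sum.mono_neutral_right) (auto simp: detn_noninj_rows finite_PiE)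
  also have "\<dots> = (\<Sum>k\<in>INJ d n. (\<Prod>r<d. Z r (k r)) * eps d k * plucker d b (k ` {..<d}))"
    by (rule sum.cong) (auto simp: INJ_def detn_inj_rows)
  finally show ?thesis .
qed

lemma INJ_psubsets: "k \<in> INJ d (2*d) \<Longrightarrow> k ` {..<d} \<in> psubsets d"
  unfolding INJ_def psubsets_def by (auto simp: card_image PiE_iff)

lemma finite_INJ: "finite (INJ d n)"
  unfolding INJ_def by (auto simp: finite_PiE)

definition spn :: "nat \<Rightarrow> (nat \<Rightarrow> nat \<Rightarrow> complex) \<Rightarrow> (nat \<Rightarrow> complex) set" where
  "spn k e = {v. \<exists>c. v = lincomb k c e}"

definition indep :: "nat \<Rightarrow> (nat \<Rightarrow> nat \<Rightarrow> complex) \<Rightarrow> bool" where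
  "indep k e \<longleftrightarrow> (\<forall>c. lincomb k c e = (\<lambda>_. 0) \<longrightarrow> (\<forall>j<k. c j = 0))"

lemma is_basis_alt: "is_basis n k W b \<longleftrightarrow> (\<forall>j<k. b j \<in> cvec n) \<and> W = spn k b \<and> indep k b"
  unfolding is_basis_def spn_def indep_def by simp

lemma lincomb_apply: "lincomb k c e i = (\<Sum>j<k. c j * e j i)"
  by (simp add: lincomb_def)

lemma lincomb_cong: "(\<And>j. j < k \<Longrightarrow> c j = c' j) \<Longrightarrow> lincomb k c e = lincomb k c' e"
  unfolding lincomb_def by auto

lemma lincomb_cong2: "(\<And>j. j < k \<Longrightarrow> e j = e' j) \<Longrightarrow> lincomb k c e = lincomb k c e'"
  unfolding lincomb_def by auto

lemma lincomb_cvec: "(\<And>j. j < k \<Longrightarrow> e j \<in> cvec n) \<Longrightarrow> lincomb k c e \<in> cvec n"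
  unfolding lincomb_def cvec_def by auto

lemma spn_cvec: "(\<And>j. j < k \<Longrightarrow> e j \<in> cvec n) \<Longrightarrow> v \<in> spn k e \<Longrightarrow> v \<in> cvec n"
  unfolding spn_def using lincomb_cvec by auto

lemma lincomb_lincomb:
  "lincomb k c (\<lambda>j. lincomb m (\<lambda>r. T r j) e) = lincomb m (\<lambda>r. \<Sum>j<k. T r j * c j) e"
  unfolding lincomb_def
proof (rule ext)
  fix i
  have "(\<Sum>j<k. c j * (\<Sum>r<m. T r j * e r i)) = (\<Sum>j<k. \<Sum>r<m. c j * (T r j * e r i))"
    by (simp add: sum_distrib_left)
  also have "\<dots> = (\<Sum>r<m. \<Sum>j<k. c j * (T r j * e r i))" by (rule sum.swap)
  also have "\<dots> = (\<Sum>r<m. (\<Sum>j<k. T r j * c j) * e r i)"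
    by (intro sum.cong refl) (simp add: sum_distrib_right sum_distrib_left mult_ac)
  finally show "(\<Sum>j<k. c j * (\<Sum>r<m. T r j * e r i)) = (\<Sum>r<m. (\<Sum>j<k. T r j * c j) * e r i)" .
qed

lemma lincomb_in_spn: "lincomb k c e \<in> spn k e" unfolding spn_def by auto

lemma lincomb_zero_coeffs: "lincomb k (\<lambda>_. 0) e = (\<lambda>_. 0)" by (simp add: lincomb_def)

lemma sum_delta_mult: "j < (k::nat) \<Longrightarrow> (\<Sum>r<k. (if r = j then 1 else 0) * (f r :: complex)) = f j"
proof -
  assume j: "j < k"
  have "(\<Sum>r<k. (if r = j then 1 else 0) * f r) = (\<Sum>r<k. if r = j then f r else 0)"
    by (rule sum.cong) auto
  also have "\<dots> = f j" using j by (subst sum.delta) auto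
  finally show ?thesis .
qed

lemma sum_delta_mult': "j < (k::nat) \<Longrightarrow> (\<Sum>r<k. (if j = r then 1 else 0) * (f r :: complex)) = f j"
  using sum_delta_mult[of j k f] by (simp add: eq_commute)

lemma lincomb_vec_e: "j < k \<Longrightarrow> lincomb k (\<lambda>r. if r = j then 1 else 0) e = e j"
  unfolding lincomb_def by (rule ext) (simp add: sum_delta_mult)

lemma e_in_spn: "j < k \<Longrightarrow> e j \<in> spn k e"
  using lincomb_vec_e[of j k e] lincomb_in_spn[of k _ e] by metis

lemma mk_mult_vec: "i < n \<Longrightarrow> v \<in> carrier_vec n \<Longrightarrow> (mk n T *\<^sub>v v) $ i = (\<Sum>j<n. T i j * v $ j)"
  by (simp add: mk_def scalar_prod_def atLeast0LessThan row_def)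

lemma detn_zero_iff:
  "detn n T = 0 \<longleftrightarrow> (\<exists>v. (\<exists>j<n. v j \<noteq> 0) \<and> (\<forall>i<n. (\<Sum>j<n. T i j * v j) = 0))"
proof
  assume "detn n T = 0"
  then obtain v where v: "v \<in> carrier_vec n" "v \<noteq> 0\<^sub>v n" "mk n T *\<^sub>v v = 0\<^sub>v n"
    unfolding detn_mk using det_0_iff_vec_prod_zero_field[OF mk_carrier] by blast
  have "\<exists>j<n. v $ j \<noteq> 0"
  proof (rule ccontr)
    assume "\<not> ?thesis"
    then have "v = 0\<^sub>v n" using v(1) by (intro eq_vecI) auto
    with v(2) show False by simp
  qed
  moreover have "\<forall>i<n. (\<Sum>j<n. T i j * v $ j) = 0"
  proof (intro allI impI)
    fix i assume i: "i < n"
    have "(mk n T *\<^sub>v v) $ i = 0" using v(3) i by simp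
    then show "(\<Sum>j<n. T i j * v $ j) = 0" using mk_mult_vec[OF i v(1)] by simp
  qed
  ultimately show "\<exists>v. (\<exists>j<n. v j \<noteq> 0) \<and> (\<forall>i<n. (\<Sum>j<n. T i j * v j) = 0)"
    by (intro exI[of _ "\<lambda>j. v $ j"]) auto
next
  assume "\<exists>v. (\<exists>j<n. v j \<noteq> 0) \<and> (\<forall>i<n. (\<Sum>j<n. T i j * v j) = 0)"
  then obtain v where v: "\<exists>j<n. v j \<noteq> 0" "\<forall>i<n. (\<Sum>j<n. T i j * v j) = 0" by blast
  let ?w = "vec n v"
  have w: "?w \<in> carrier_vec n" by simp
  have "?w \<noteq> 0\<^sub>v n" using v(1) by (auto simp: vec_eq_iff)
  moreover have "mk n T *\<^sub>v ?w = 0\<^sub>v n"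
    by (rule eq_vecI) (use v(2) in \<open>auto simp: mk_def scalar_prod_def atLeast0LessThan\<close>)
  ultimately show "detn n T = 0"
    unfolding detn_mk using det_0_iff_vec_prod_zero_field[OF mk_carrier] w by blast
qed

lemma detn_inverse:
  assumes "detn n T \<noteq> 0"
  shows "\<exists>T'. (\<forall>i<n. \<forall>j<n. (\<Sum>l<n. T i l * T' l j) = (if i = j then 1 else 0))
            \<and> (\<forall>i<n. \<forall>j<n. (\<Sum>l<n. T' i l * T l j) = (if i = j then 1 else 0))"
proof -
  let ?A = "mk n T"
  let ?B = "(1 / jdet ?A) \<cdot>\<^sub>m adj_mat ?A"
  have dA: "jdet ?A \<noteq> 0" using assms by (simp add: detn_mk)
  have adj: "adj_mat ?A \<in> carrier_mat n n" "?A * adj_mat ?A = jdet ?A \<cdot>\<^sub>m 1\<^sub>m n"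
    "adj_mat ?A * ?A = jdet ?A \<cdot>\<^sub>m 1\<^sub>m n" using adj_mat[OF mk_carrier] by auto
  have B: "?B \<in> carrier_mat n n" using adj by simp
  then have Bd: "dim_row ?B = n" "dim_col ?B = n" by auto
  have "?A * ?B = (1 / jdet ?A) \<cdot>\<^sub>m (jdet ?A \<cdot>\<^sub>m 1\<^sub>m n)"
    using adj by (simp add: mult_smult_distrib[OF mk_carrier adj(1)])
  then have AB: "?A * ?B = 1\<^sub>m n" using dA by (auto intro!: eq_matI)
  have "?B * ?A = (1 / jdet ?A) \<cdot>\<^sub>m (jdet ?A \<cdot>\<^sub>m 1\<^sub>m n)"
    using adj by (simp add: mult_smult_assoc_mat[OF adj(1) mk_carrier])
  then have BA: "?B * ?A = 1\<^sub>m n" using dA by (auto intro!: eq_matI)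
  define T' where "T' i j = ?B $$ (i,j)" for i j
  have "(\<Sum>l<n. T i l * T' l j) = (if i = j then 1 else 0)" if "i < n" "j < n" for i j
  proof -
    have "(?A * ?B) $$ (i,j) = (\<Sum>l<n. T i l * T' l j)"
      using that Bd by (simp add: T'_def scalar_prod_def atLeast0LessThan row_def col_def)
    then show ?thesis using AB that by simp
  qed
  moreover have "(\<Sum>l<n. T' i l * T l j) = (if i = j then 1 else 0)" if "i < n" "j < n" for i j
  proof -
    have "(?B * ?A) $$ (i,j) = (\<Sum>l<n. T' i l * T l j)"
      using that Bd by (simp add: T'_def scalar_prod_def atLeast0LessThan row_def col_def)
    then show ?thesis using BA that by simp
  qed
  ultimately show ?thesis by blast
qed

lemma transform_spn_indep:
  assumes b: "\<And>j. j < d \<Longrightarrow> b j = lincomb d (\<lambda>r. T r j) e"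
    and dT: "detn d T \<noteq> 0"
  shows "spn d b = spn d e" "indep d e \<Longrightarrow> indep d b"
proof -
  obtain T' where T1: "\<forall>i<d. \<forall>j<d. (\<Sum>l<d. T i l * T' l j) = (if i = j then 1 else 0)"
    and T2: "\<forall>i<d. \<forall>j<d. (\<Sum>l<d. T' i l * T l j) = (if i = j then 1 else 0)"
    using detn_inverse[OF dT] by blast
  have lb: "lincomb d x b = lincomb d (\<lambda>r. \<Sum>j<d. T r j * x j) e" for x
  proof -
    have "lincomb d x b = lincomb d x (\<lambda>j. lincomb d (\<lambda>r. T r j) e)"
      by (rule lincomb_cong2) (simp add: b)
    then show ?thesis by (simp add: lincomb_lincomb)
  qed
  have ee: "e i = lincomb d (\<lambda>j. T' j i) b" if i: "i < d" for i
  proof -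
    have "lincomb d (\<lambda>j. T' j i) b = lincomb d (\<lambda>r. \<Sum>j<d. T r j * T' j i) e" by (rule lb)
    also have "\<dots> = lincomb d (\<lambda>r. if r = i then 1 else 0) e"
      by (rule lincomb_cong) (use T1 i in auto)
    also have "\<dots> = e i" using i by (rule lincomb_vec_e)
    finally show ?thesis by simp
  qed
  have "spn d b \<subseteq> spn d e" unfolding spn_def using lb by blast
  moreover have "spn d e \<subseteq> spn d b"
  proof
    fix v assume "v \<in> spn d e"
    then obtain x where v: "v = lincomb d x e" unfolding spn_def by blast
    have "v = lincomb d x (\<lambda>i. lincomb d (\<lambda>j. T' j i) b)"
      unfolding v by (rule lincomb_cong2) (simp add: ee)
    then show "v \<in> spn d b" by (simp add: lincomb_lincomb lincomb_in_spn)
  qed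
  ultimately show "spn d b = spn d e" by blast
  assume ie: "indep d e"
  show "indep d b" unfolding indep_def
  proof (intro allI impI)
    fix x j assume x: "lincomb d x b = (\<lambda>_. 0)" and j: "j < d"
    have "\<forall>r<d. (\<Sum>i<d. T r i * x i) = 0" using x ie unfolding lb indep_def by blast
    then have "(\<Sum>r<d. T' j r * (\<Sum>i<d. T r i * x i)) = 0" by simp
    also have "(\<Sum>r<d. T' j r * (\<Sum>i<d. T r i * x i)) = (\<Sum>i<d. (\<Sum>r<d. T' j r * T r i) * x i)"
    proof -
      have "(\<Sum>r<d. T' j r * (\<Sum>i<d. T r i * x i)) = (\<Sum>r<d. \<Sum>i<d. T' j r * T r i * x i)"
        by (simp add: sum_distrib_left mult.assoc)
      also have "\<dots> = (\<Sum>i<d. \<Sum>r<d. T' j r * T r i * x i)" by (rule sum.swap)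
      also have "\<dots> = (\<Sum>i<d. (\<Sum>r<d. T' j r * T r i) * x i)" by (simp add: sum_distrib_right)
      finally show ?thesis .
    qed
    also have "\<dots> = (\<Sum>i<d. (if j = i then 1 else 0) * x i)"
      by (rule sum.cong) (use T2 j in auto)
    also have "\<dots> = x j" using j by (simp add: sum_delta_mult')
    finally show "x j = 0" .
  qed
qed

lemma indep_detn:
  assumes b: "\<And>j. j < d \<Longrightarrow> b j = lincomb d (\<lambda>r. T r j) e"
    and ib: "indep d b"
  shows "detn d T \<noteq> 0"
proof
  assume "detn d T = 0"
  then obtain v where v: "\<exists>j<d. v j \<noteq> 0" "\<forall>i<d. (\<Sum>j<d. T i j * v j) = 0"
    using detn_zero_iff by blast
  have "lincomb d v b = lincomb d v (\<lambda>j. lincomb d (\<lambda>r. T r j) e)"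
    by (rule lincomb_cong2) (simp add: b)
  also have "\<dots> = lincomb d (\<lambda>r. \<Sum>j<d. T r j * v j) e" by (simp add: lincomb_lincomb)
  also have "\<dots> = lincomb d (\<lambda>_. 0) e" by (rule lincomb_cong) (use v(2) in auto)
  also have "\<dots> = (\<lambda>_. 0)" by (simp add: lincomb_def)
  finally show False using ib v(1) unfolding indep_def by blast
qed

lemma sum_split_add: "(\<Sum>j<(m::nat) + n. f j) = (\<Sum>j<m. f j) + (\<Sum>j<n. f (m + j))"
  by (induction n) (simp_all add: add.assoc)

lemma sum_split2: "(\<Sum>j<2*(d::nat). f j) = (\<Sum>j<d. f j) + (\<Sum>j<d. f (d + j))"
  using sum_split_add[of f d d] by (simp add: mult_2)

locale frame =
  fixes d :: nat and a c :: "nat \<Rightarrow> nat \<Rightarrow> complex" and R :: "nat \<Rightarrow> nat \<Rightarrow> complex"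
  assumes a_cvec: "j < d \<Longrightarrow> a j \<in> cvec (2*d)"
    and c_cvec: "j < d \<Longrightarrow> c j \<in> cvec (2*d)"
    and Ra: "r < 2*d \<Longrightarrow> j < d \<Longrightarrow> (\<Sum>l<2*d. R r l * a j l) = (if r = j then 1 else 0)"
    and Rc: "r < 2*d \<Longrightarrow> j < d \<Longrightarrow> (\<Sum>l<2*d. R r l * c j l) = (if r = d + j then 1 else 0)"
    and decomp: "x \<in> cvec (2*d) \<Longrightarrow> x = (\<lambda>i. lincomb d (\<lambda>r. \<Sum>l<2*d. R r l * x l) a i
                                     + lincomb d (\<lambda>r. \<Sum>l<2*d. R (d+r) l * x l) c i)"
begin

lemma R_lincomb:
  assumes r: "r < 2*d"
  shows "(\<Sum>l<2*d. R r l * (lincomb d L a l + lincomb d M c l))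
       = (if r < d then L r else M (r - d))"
proof -
  have "(\<Sum>l<2*d. R r l * (lincomb d L a l + lincomb d M c l))
      = (\<Sum>j<d. L j * (\<Sum>l<2*d. R r l * a j l)) + (\<Sum>j<d. M j * (\<Sum>l<2*d. R r l * c j l))"
  proof -
    have "(\<Sum>l<2*d. R r l * (lincomb d L a l + lincomb d M c l))
        = (\<Sum>l<2*d. \<Sum>j<d. L j * (R r l * a j l)) + (\<Sum>l<2*d. \<Sum>j<d. M j * (R r l * c j l))"
      by (simp add: lincomb_def distrib_left sum.distrib sum_distrib_left mult_ac)
    also have "\<dots> = (\<Sum>j<d. \<Sum>l<2*d. L j * (R r l * a j l)) + (\<Sum>j<d. \<Sum>l<2*d. M j * (R r l * c j l))"
    proof -
      have s1: "(\<Sum>l<2*d. \<Sum>j<d. L j * (R r l * a j l)) = (\<Sum>j<d. \<Sum>l<2*d. L j * (R r l * a j l))"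
        by (rule sum.swap)
      have s2: "(\<Sum>l<2*d. \<Sum>j<d. M j * (R r l * c j l)) = (\<Sum>j<d. \<Sum>l<2*d. M j * (R r l * c j l))"
        by (rule sum.swap)
      show ?thesis by (simp only: s1 s2)
    qed
    also have "\<dots> = (\<Sum>j<d. L j * (\<Sum>l<2*d. R r l * a j l)) + (\<Sum>j<d. M j * (\<Sum>l<2*d. R r l * c j l))"
      by (simp add: sum_distrib_left)
    finally show ?thesis .
  qed
  also have "\<dots> = (\<Sum>j<d. L j * (if r = j then 1 else 0)) + (\<Sum>j<d. M j * (if r = d + j then 1 else 0))"
    using r by (simp add: Ra Rc)
  also have "\<dots> = (if r < d then L r else M (r - d))"
  proof (cases "r < d")
    case True
    then have "(\<Sum>j<d. M j * (if r = d + j then 1 else 0)) = 0" by (intro sum.neutral) auto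
    moreover have "(\<Sum>j<d. L j * (if r = j then 1 else 0)) = L r"
      using sum_delta_mult'[OF True, of L] by (simp add: mult.commute)
    ultimately show ?thesis using True by simp
  next
    case False
    then have "(\<Sum>j<d. L j * (if r = j then 1 else 0)) = 0" by (intro sum.neutral) auto
    moreover have "(\<Sum>j<d. M j * (if r = d + j then 1 else 0)) = M (r - d)"
    proof -
      have rd: "r - d < d" using r False by simp
      have "(\<Sum>j<d. M j * (if r = d + j then 1 else 0)) = (\<Sum>j<d. (if r - d = j then 1 else 0) * M j)"
        by (rule sum.cong) (use False in auto)
      then show ?thesis using sum_delta_mult'[OF rd, of M] by simp
    qed
    ultimately show ?thesis using False by simp
  qed
  finally show ?thesis .
qed

definition Xc :: "(nat \<Rightarrow> nat \<Rightarrow> complex) \<Rightarrow> nat \<Rightarrow> nat \<Rightarrow> complex" where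
  "Xc b r j = (\<Sum>l<2*d. R r l * b j l)"

definition Yc :: "(nat \<Rightarrow> nat \<Rightarrow> complex) \<Rightarrow> nat \<Rightarrow> nat \<Rightarrow> complex" where
  "Yc b r j = (\<Sum>l<2*d. R (d + r) l * b j l)"

lemma XY_decomp:
  assumes "b j \<in> cvec (2*d)"
  shows "b j = (\<lambda>i. lincomb d (\<lambda>r. Xc b r j) a i + lincomb d (\<lambda>r. Yc b r j) c i)"
  using decomp[OF assms] unfolding Xc_def Yc_def .

lemma XY_of_lincomb:
  assumes "b j = (\<lambda>i. lincomb d L a i + lincomb d M c i)" "r < d"
  shows "Xc b r j = L r" "Yc b r j = M r"
proof -
  show "Xc b r j = L r" unfolding Xc_def assms(1) using R_lincomb[of r L M] assms(2) by simp
  show "Yc b r j = M r" unfolding Yc_def assms(1) using R_lincomb[of "d + r" L M] assms(2) by simp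
qed

end

lemma frame_exists:
  assumes ac: "\<And>j. j < d \<Longrightarrow> a j \<in> cvec (2*d)" and cc: "\<And>j. j < d \<Longrightarrow> c j \<in> cvec (2*d)"
    and ia: "indep d a" and ic: "indep d c"
    and int: "spn d a \<inter> spn d c = {\<lambda>_. 0}"
  shows "\<exists>R. frame d a c R"
proof -
  define q where "q j = (if j < d then a j else c (j - d))" for j
  have qc: "q j \<in> cvec (2*d)" if "j < 2*d" for j using that ac cc by (auto simp: q_def)
  have lq: "(\<Sum>j<2*d. v j * q j i) = lincomb d v a i + lincomb d (\<lambda>j. v (d + j)) c i" for v i
  proof -
    have "(\<Sum>j<2*d. v j * q j i) = (\<Sum>j<d. v j * q j i) + (\<Sum>j<d. v (d+j) * q (d+j) i)"
      by (rule sum_split2)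
    moreover have "(\<Sum>j<d. v j * q j i) = lincomb d v a i"
      unfolding lincomb_def by (rule sum.cong) (auto simp: q_def)
    moreover have "(\<Sum>j<d. v (d+j) * q (d+j) i) = lincomb d (\<lambda>j. v (d + j)) c i"
      unfolding lincomb_def by (rule sum.cong) (auto simp: q_def)
    ultimately show ?thesis by simp
  qed
  have dQ: "detn (2*d) (\<lambda>i j. q j i) \<noteq> 0"
  proof
    assume "detn (2*d) (\<lambda>i j. q j i) = 0"
    then obtain v where v: "\<exists>j<2*d. v j \<noteq> 0" "\<forall>i<2*d. (\<Sum>j<2*d. q j i * v j) = 0"
      unfolding detn_zero_iff by blast
    have z: "lincomb d v a i + lincomb d (\<lambda>j. v (d + j)) c i = 0" for i
    proof (cases "i < 2*d")
      case True
      have "(\<Sum>j<2*d. v j * q j i) = (\<Sum>j<2*d. q j i * v j)" by (simp add: mult.commute)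
      then show ?thesis using v(2) True lq[of v i] by simp
    next
      case False
      then have "q j i = 0" if "j < 2*d" for j using qc[OF that] by (simp add: cvec_def)
      then have "(\<Sum>j<2*d. v j * q j i) = 0" by simp
      then show ?thesis using lq[of v i] by simp
    qed
    have "lincomb d v a = (\<lambda>i. - lincomb d (\<lambda>j. v (d + j)) c i)"
    proof (rule ext)
      fix i show "lincomb d v a i = - lincomb d (\<lambda>j. v (d + j)) c i"
        using z[of i] by (simp add: eq_neg_iff_add_eq_0)
    qed
    also have "\<dots> = lincomb d (\<lambda>j. - v (d + j)) c" by (simp add: lincomb_def sum_negf)
    finally have e: "lincomb d v a = lincomb d (\<lambda>j. - v (d + j)) c" .
    have "lincomb d v a \<in> spn d c" unfolding e by (rule lincomb_in_spn)
    then have "lincomb d v a \<in> spn d a \<inter> spn d c" using lincomb_in_spn[of d v a] by blast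
    then have la: "lincomb d v a = (\<lambda>_. 0)" using int by auto
    then have A: "\<forall>j<d. v j = 0" using ia unfolding indep_def by blast
    have "lincomb d (\<lambda>j. - v (d + j)) c = (\<lambda>_. 0)" using e la by simp
    then have B: "\<forall>j<d. - v (d + j) = 0" using ic unfolding indep_def by blast
    have "\<forall>j<2*d. v j = 0"
    proof (intro allI impI)
      fix j assume j: "j < 2*d"
      show "v j = 0"
      proof (cases "j < d")
        case True then show ?thesis using A by simp
      next
        case False
        then have jd: "j - d < d" "d + (j - d) = j" using j by auto
        have "- v (d + (j - d)) = 0" using B jd(1) by blast
        then show ?thesis using jd(2) by simp
      qed
    qed
    then show False using v(1) by blast
  qed
  obtain T where T1: "\<forall>i<2*d. \<forall>j<2*d. (\<Sum>l<2*d. q l i * T l j) = (if i = j then 1 else 0)"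
    and T2: "\<forall>i<2*d. \<forall>j<2*d. (\<Sum>l<2*d. T i l * q j l) = (if i = j then 1 else 0)"
    using detn_inverse[OF dQ] by blast
  have "frame d a c T"
  proof
    show "a j \<in> cvec (2*d)" if "j < d" for j using ac that .
    show "c j \<in> cvec (2*d)" if "j < d" for j using cc that .
    show "(\<Sum>l<2*d. T r l * a j l) = (if r = j then 1 else 0)" if "r < 2*d" "j < d" for r j
    proof -
      have "(\<Sum>l<2*d. T r l * q j l) = (if r = j then 1 else 0)" using T2 that by auto
      then show ?thesis using that(2) by (simp add: q_def)
    qed
    show "(\<Sum>l<2*d. T r l * c j l) = (if r = d + j then 1 else 0)" if "r < 2*d" "j < d" for r j
    proof -
      have "(\<Sum>l<2*d. T r l * q (d + j) l) = (if r = d + j then 1 else 0)" using T2 that by auto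
      then show ?thesis by (simp add: q_def)
    qed
    show "x = (\<lambda>i. lincomb d (\<lambda>r. \<Sum>l<2*d. T r l * x l) a i
                + lincomb d (\<lambda>r. \<Sum>l<2*d. T (d+r) l * x l) c i)" if x: "x \<in> cvec (2*d)" for x
    proof (rule ext)
      fix i
      have "lincomb d (\<lambda>r. \<Sum>l<2*d. T r l * x l) a i + lincomb d (\<lambda>r. \<Sum>l<2*d. T (d+r) l * x l) c i
          = (\<Sum>j<2*d. (\<Sum>l<2*d. T j l * x l) * q j i)" by (rule lq[symmetric])
      also have "\<dots> = x i"
      proof (cases "i < 2*d")
        case True
        have "(\<Sum>j<2*d. (\<Sum>l<2*d. T j l * x l) * q j i) = (\<Sum>l<2*d. (\<Sum>j<2*d. q j i * T j l) * x l)"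
        proof -
          have "(\<Sum>j<2*d. (\<Sum>l<2*d. T j l * x l) * q j i) = (\<Sum>j<2*d. \<Sum>l<2*d. q j i * T j l * x l)"
            by (simp add: sum_distrib_left sum_distrib_right mult_ac)
          also have "\<dots> = (\<Sum>l<2*d. \<Sum>j<2*d. q j i * T j l * x l)" by (rule sum.swap)
          also have "\<dots> = (\<Sum>l<2*d. (\<Sum>j<2*d. q j i * T j l) * x l)" by (simp add: sum_distrib_right)
          finally show ?thesis .
        qed
        also have "\<dots> = (\<Sum>l<2*d. (if i = l then 1 else 0) * x l)"
          by (rule sum.cong) (use T1 True in auto)
        also have "\<dots> = x i" using True by (rule sum_delta_mult')
        finally show ?thesis .
      next
        case False
        then have "q j i = 0" if "j < 2*d" for j using qc[OF that] by (simp add: cvec_def)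
        moreover have "x i = 0" using x False by (simp add: cvec_def)
        ultimately show ?thesis by simp
      qed
      finally show "x i = lincomb d (\<lambda>r. \<Sum>l<2*d. T r l * x l) a i
                + lincomb d (\<lambda>r. \<Sum>l<2*d. T (d+r) l * x l) c i" by simp
    qed
  qed
  then show ?thesis by blast
qed

lemma laplace_replace_row:
  fixes A :: "'a::comm_ring_1 mat"
  assumes A: "A \<in> carrier_mat n n" and i: "i < n"
  shows "jdet (mk n (\<lambda>r j. if r = i then y j else A $$ (r,j))) = (\<Sum>j<n. y j * adj_mat A $$ (j, i))"
proof -
  let ?A' = "mk n (\<lambda>r j. if r = i then y j else A $$ (r,j))"
  have del: "mat_delete ?A' i j = mat_delete A i j" if "j < n" for j
    using A i that by (intro eq_matI) (auto simp: mat_delete_def)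
  have "jdet ?A' = (\<Sum>j<n. ?A' $$ (i,j) * cofactor ?A' i j)"
    by (rule laplace_expansion_row[OF mk_carrier i])
  also have "\<dots> = (\<Sum>j<n. y j * cofactor A i j)"
    by (rule sum.cong) (use i del in \<open>auto simp: cofactor_def\<close>)
  also have "\<dots> = (\<Sum>j<n. y j * adj_mat A $$ (j, i))"
    by (rule sum.cong) (use A i in \<open>auto simp: adj_mat_def\<close>)
  finally show ?thesis .
qed

lemma poly_eq_inf:
  fixes p q :: "complex poly"
  assumes "infinite S" "\<And>z. z \<in> S \<Longrightarrow> poly p z = poly q z"
  shows "p = q"
proof (rule ccontr)
  assume "p \<noteq> q"
  then have "p - q \<noteq> 0" by simp
  then have "finite {z. poly (p - q) z = 0}" by (rule poly_roots_finite)
  moreover have "S \<subseteq> {z. poly (p - q) z = 0}" using assms(2) by auto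
  ultimately show False using assms(1) finite_subset by blast
qed

lemma infinite_nonroots:
  fixes p :: "complex poly"
  assumes "p \<noteq> 0"
  shows "infinite {z. poly p z \<noteq> 0}"
proof
  assume "finite {z. poly p z \<noteq> 0}"
  moreover have "finite {z. poly p z = 0}" using poly_roots_finite[OF assms] .
  ultimately have "finite ({z. poly p z \<noteq> 0} \<union> {z. poly p z = 0})" by simp
  moreover have "{z. poly p z \<noteq> 0} \<union> {z. poly p z = 0} = (UNIV :: complex set)" by auto
  ultimately show False using infinite_UNIV_char_0[where 'a=complex] by simp
qed

context frame
begin

lemma coords_a:
  assumes "b j = lincomb d L a" "r < d"
  shows "Xc b r j = L r" "Yc b r j = 0"
proof -
  have "b j = (\<lambda>i. lincomb d L a i + lincomb d (\<lambda>_. 0) c i)"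
    using assms(1) by (simp add: lincomb_def)
  then show "Xc b r j = L r" "Yc b r j = 0" using XY_of_lincomb[OF _ assms(2)] by auto
qed

lemma coords_c:
  assumes "b j = lincomb d M c" "r < d"
  shows "Xc b r j = 0" "Yc b r j = M r"
proof -
  have "b j = (\<lambda>i. lincomb d (\<lambda>_. 0) a i + lincomb d M c i)"
    using assms(1) by (simp add: lincomb_def)
  then show "Xc b r j = 0" "Yc b r j = M r" using XY_of_lincomb[OF _ assms(2)] by auto
qed

lemma coords_ac:
  assumes "b j = lincomb d L (\<lambda>j i. a j i + c j i)" "r < d"
  shows "Xc b r j = L r" "Yc b r j = L r"
proof -
  have "b j = (\<lambda>i. lincomb d L a i + lincomb d L c i)"
    using assms(1) by (simp add: lincomb_def distrib_left sum.distrib)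
  then show "Xc b r j = L r" "Yc b r j = L r" using XY_of_lincomb[OF _ assms(2)] by auto
qed

lemma spn_choice:
  assumes "\<And>j. j < d \<Longrightarrow> b j \<in> spn d e"
  shows "\<exists>L. \<forall>j<d. b j = lincomb d (\<lambda>r. L r j) e"
proof -
  have "\<forall>j. \<exists>x. j < d \<longrightarrow> b j = lincomb d x e" using assms unfolding spn_def by blast
  then obtain x where "\<forall>j. j < d \<longrightarrow> b j = lincomb d (x j) e" by metis
  then show ?thesis by (intro exI[of _ "\<lambda>r j. x j r"]) auto
qed

lemma in_a_coords:
  assumes "\<And>j. j < d \<Longrightarrow> b j \<in> spn d a" "indep d b"
  shows "\<And>r j. r < d \<Longrightarrow> j < d \<Longrightarrow> Yc b r j = 0" "detn d (Xc b) \<noteq> 0"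
proof -
  obtain L where L: "\<forall>j<d. b j = lincomb d (\<lambda>r. L r j) a" using spn_choice assms(1) by blast
  show "\<And>r j. r < d \<Longrightarrow> j < d \<Longrightarrow> Yc b r j = 0"
  proof -
    fix r j assume r: "r < d" and j: "j < d"
    have bj: "b j = lincomb d (\<lambda>r. L r j) a" using L j by blast
    show "Yc b r j = 0" by (rule coords_a(2)[where b=b and j=j, OF bj r])
  qed
  have "b j = lincomb d (\<lambda>r. Xc b r j) a" if j: "j < d" for j
  proof -
    have bj: "b j = lincomb d (\<lambda>r. L r j) a" using L j by blast
    also have "\<dots> = lincomb d (\<lambda>r. Xc b r j) a" by (rule lincomb_cong) (simp add: coords_a(1)[where b=b and j=j, OF bj])
    finally show ?thesis .
  qed
  then show "detn d (Xc b) \<noteq> 0" using indep_detn assms(2) by blast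
qed

lemma in_c_coords:
  assumes "\<And>j. j < d \<Longrightarrow> b j \<in> spn d c" "indep d b"
  shows "\<And>r j. r < d \<Longrightarrow> j < d \<Longrightarrow> Xc b r j = 0" "detn d (Yc b) \<noteq> 0"
proof -
  obtain L where L: "\<forall>j<d. b j = lincomb d (\<lambda>r. L r j) c" using spn_choice assms(1) by blast
  show "\<And>r j. r < d \<Longrightarrow> j < d \<Longrightarrow> Xc b r j = 0"
  proof -
    fix r j assume r: "r < d" and j: "j < d"
    have bj: "b j = lincomb d (\<lambda>r. L r j) c" using L j by blast
    show "Xc b r j = 0" by (rule coords_c(1)[where b=b and j=j, OF bj r])
  qed
  have "b j = lincomb d (\<lambda>r. Yc b r j) c" if j: "j < d" for j
  proof -
    have bj: "b j = lincomb d (\<lambda>r. L r j) c" using L j by blast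
    also have "\<dots> = lincomb d (\<lambda>r. Yc b r j) c" by (rule lincomb_cong) (simp add: coords_c(2)[where b=b and j=j, OF bj])
    finally show ?thesis .
  qed
  then show "detn d (Yc b) \<noteq> 0" using indep_detn assms(2) by blast
qed

lemma in_ac_coords:
  assumes "\<And>j. j < d \<Longrightarrow> b j \<in> spn d (\<lambda>j i. a j i + c j i)" "indep d b"
  shows "\<And>r j. r < d \<Longrightarrow> j < d \<Longrightarrow> Xc b r j = Yc b r j" "detn d (Xc b) \<noteq> 0"
proof -
  obtain L where L: "\<forall>j<d. b j = lincomb d (\<lambda>r. L r j) (\<lambda>j i. a j i + c j i)"
    using spn_choice assms(1) by blast
  show "\<And>r j. r < d \<Longrightarrow> j < d \<Longrightarrow> Xc b r j = Yc b r j"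
  proof -
    fix r j assume r: "r < d" and j: "j < d"
    have bj: "b j = lincomb d (\<lambda>r. L r j) (\<lambda>j i. a j i + c j i)" using L j by blast
    show "Xc b r j = Yc b r j" using coords_ac[where b=b and j=j, OF bj r] by simp
  qed
  have "b j = lincomb d (\<lambda>r. Xc b r j) (\<lambda>j i. a j i + c j i)" if j: "j < d" for j
  proof -
    have bj: "b j = lincomb d (\<lambda>r. L r j) (\<lambda>j i. a j i + c j i)" using L j by blast
    also have "\<dots> = lincomb d (\<lambda>r. Xc b r j) (\<lambda>j i. a j i + c j i)"
      by (rule lincomb_cong) (simp add: coords_ac(1)[where b=b and j=j, OF bj])
    finally show ?thesis .
  qed
  then show "detn d (Xc b) \<noteq> 0" using indep_detn assms(2) by blast
qed

definition Xm :: "(nat \<Rightarrow> nat \<Rightarrow> complex) \<Rightarrow> complex mat" where "Xm b = mk d (Xc b)"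
definition Ym :: "(nat \<Rightarrow> nat \<Rightarrow> complex) \<Rightarrow> complex mat" where "Ym b = mk d (Yc b)"

lemma Xm_carrier[simp]: "Xm b \<in> carrier_mat d d" and Ym_carrier[simp]: "Ym b \<in> carrier_mat d d"
  by (simp_all add: Xm_def Ym_def)

definition ZN :: "nat \<Rightarrow> nat \<Rightarrow> nat \<Rightarrow> nat \<Rightarrow> complex" where
  "ZN i k r l = (if r = i then R (d + k) l else R r l)"
definition ZN' :: "nat \<Rightarrow> nat \<Rightarrow> nat \<Rightarrow> nat \<Rightarrow> complex" where
  "ZN' i k r l = (if r = i then R k l else R (d + r) l)"

lemma ZN_det:
  assumes "i < d" and that: "k < d"
  shows "detn d (\<lambda>r j. \<Sum>l<2*d. ZN i k r l * b j l) = (Ym b * adj_mat (Xm b)) $$ (k, i)"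
proof -
  have "detn d (\<lambda>r j. \<Sum>l<2*d. ZN i k r l * b j l)
      = jdet (mk d (\<lambda>r j. if r = i then Yc b k j else Xm b $$ (r,j)))"
    unfolding detn_mk by (intro arg_cong[of _ _ jdet] eq_matI) (auto simp: ZN_def Xm_def Xc_def Yc_def)
  also have "\<dots> = (\<Sum>j<d. Yc b k j * adj_mat (Xm b) $$ (j, i))"
    by (rule laplace_replace_row[OF Xm_carrier assms(1)])
  also have "\<dots> = (Ym b * adj_mat (Xm b)) $$ (k, i)"
    using that assms adj_mat(1)[OF Xm_carrier[of b]]
    by (simp add: Ym_def scalar_prod_def atLeast0LessThan)
  finally show ?thesis .
qed

lemma ZN'_det:
  assumes "i < d" and that: "k < d"
  shows "detn d (\<lambda>r j. \<Sum>l<2*d. ZN' i k r l * b j l) = (Xm b * adj_mat (Ym b)) $$ (k, i)"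
proof -
  have "detn d (\<lambda>r j. \<Sum>l<2*d. ZN' i k r l * b j l)
      = jdet (mk d (\<lambda>r j. if r = i then Xc b k j else Ym b $$ (r,j)))"
    unfolding detn_mk by (intro arg_cong[of _ _ jdet] eq_matI) (auto simp: ZN'_def Ym_def Xc_def Yc_def)
  also have "\<dots> = (\<Sum>j<d. Xc b k j * adj_mat (Ym b) $$ (j, i))"
    by (rule laplace_replace_row[OF Ym_carrier assms(1)])
  also have "\<dots> = (Xm b * adj_mat (Ym b)) $$ (k, i)"
    using that assms adj_mat(1)[OF Ym_carrier[of b]]
    by (simp add: Xm_def scalar_prod_def atLeast0LessThan)
  finally show ?thesis .
qed

lemma X_det: "detn d (\<lambda>r j. \<Sum>l<2*d. R r l * b j l) = jdet (Xm b)"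
  unfolding detn_mk Xm_def by (rule arg_cong[of _ _ jdet], rule eq_matI) (auto simp: Xc_def)

lemma Y_det: "detn d (\<lambda>r j. \<Sum>l<2*d. R (d + r) l * b j l) = jdet (Ym b)"
  unfolding detn_mk Ym_def by (rule arg_cong[of _ _ jdet], rule eq_matI) (auto simp: Yc_def)

end

interpretation ev: comm_ring_hom "\<lambda>p::complex poly. poly p z" by unfold_locales auto

abbreviation evm :: "complex \<Rightarrow> complex poly mat \<Rightarrow> complex mat" where
  "evm z A \<equiv> map_mat (\<lambda>p. poly p z) A"

lemma evm_det: "jdet (evm z A) = poly (jdet A) z"
  by (rule ev.hom_det)

lemma evm_mult: "A \<in> carrier_mat n n \<Longrightarrow> B \<in> carrier_mat n n \<Longrightarrow> evm z (A * B) = evm z A * evm z B"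
  by (rule ev.mat_hom_mult)

lemma evm_smult: "evm z (a \<cdot>\<^sub>m A) = poly a z \<cdot>\<^sub>m evm z A"
  by (rule eq_matI) auto

lemma evm_one: "evm z (1\<^sub>m n) = 1\<^sub>m n"
  by (rule eq_matI) auto

lemma adj_dims[simp]: "dim_row (adj_mat A) = dim_row A" "dim_col (adj_mat A) = dim_col A"
  by (simp_all add: adj_mat_def)

lemma smult_smult_mat: "a \<cdot>\<^sub>m (b \<cdot>\<^sub>m A) = (a * b) \<cdot>\<^sub>m (A :: 'a::comm_ring_1 mat)"
  by (rule eq_matI) auto

lemma det_adj:
  fixes A :: "complex mat"
  assumes A: "A \<in> carrier_mat n n" and dA: "jdet A \<noteq> 0" and n: "n \<ge> 1"
  shows "jdet (adj_mat A) = jdet A ^ (n - 1)"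
proof -
  have "jdet A * jdet (adj_mat A) = jdet (A * adj_mat A)"
    using det_mult[OF A adj_mat(1)[OF A]] by simp
  also have "\<dots> = jdet (jdet A \<cdot>\<^sub>m 1\<^sub>m n)" using adj_mat(2)[OF A] by simp
  also have "\<dots> = jdet A ^ n" by simp
  also have "\<dots> = jdet A * jdet A ^ (n - 1)" using n by (simp add: power_eq_if)
  finally show ?thesis using dA by simp
qed

lemma deg_le_pred:
  fixes p :: "complex poly"
  assumes "degree p \<le> d" "coeff p d = 0" "d \<ge> 1"
  shows "degree p \<le> d - 1"
proof (cases "p = 0")
  case True then show ?thesis by simp
next
  case False
  then have "coeff p (degree p) \<noteq> 0" by simp
  then have "degree p \<noteq> d" using assms(2) by auto
  then show ?thesis using assms(1) by simp
qed

lemma deg0_const: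
  fixes p :: "complex poly"
  assumes "degree p = 0"
  shows "poly p z = poly p w"
  using assms by (simp add: poly_altdef)

lemma div_x:
  fixes p :: "complex poly"
  assumes "poly p 0 = 0"
  shows "p = [:0,1:] * (p div [:0,1:])"
proof -
  have "[:0,1:] dvd p" using assms dvd_iff_poly_eq_0[of 0 p] by simp
  then show ?thesis by (rule dvd_mult_div_cancel[symmetric])
qed

locale ucurve = frame +
  fixes P :: "nat set \<Rightarrow> complex poly" and Bf :: "complex \<Rightarrow> complex \<Rightarrow> nat \<Rightarrow> nat \<Rightarrow> complex"
  assumes d1: "1 \<le> d"
    and Pdeg: "\<And>I. degree (P I) \<le> d"
    and Bf_cvec: "\<And>s t j. (s,t) \<noteq> (0,0) \<Longrightarrow> j < d \<Longrightarrow> Bf s t j \<in> cvec (2*d)"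
    and Bf_indep: "\<And>s t. (s,t) \<noteq> (0,0) \<Longrightarrow> indep d (Bf s t)"
    and Bf_pl: "\<And>s t I. (s,t) \<noteq> (0,0) \<Longrightarrow> I \<in> psubsets d \<Longrightarrow> plucker d (Bf s t) I = hom_eval d (P I) s t"
    and B0: "\<And>j. j < d \<Longrightarrow> Bf 1 0 j \<in> spn d a"
    and Binf: "\<And>j. j < d \<Longrightarrow> Bf 0 1 j \<in> spn d c"
    and B1: "\<And>j. j < d \<Longrightarrow> Bf 1 1 j \<in> spn d (\<lambda>j i. a j i + c j i)"
begin

definition CBp :: "(nat \<Rightarrow> nat \<Rightarrow> complex) \<Rightarrow> complex poly" where
  "CBp Z = (\<Sum>k\<in>INJ d (2*d). Polynomial.smult ((\<Prod>r<d. Z r (k r)) * eps d k) (P (k ` {..<d})))"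

lemma CBp_deg: "degree (CBp Z) \<le> d"
  unfolding CBp_def
  by (rule degree_sum_le[OF finite_INJ]) (rule order_trans[OF degree_smult_le Pdeg])

lemma CBp_eval:
  assumes "(s,t) \<noteq> (0,0)"
  shows "hom_eval d (CBp Z) s t = detn d (\<lambda>r j. \<Sum>l<2*d. Z r l * Bf s t j l)"
  unfolding CBp_def hom_eval_sum hom_eval_smult cauchy_binet
  by (rule sum.cong) (use assms Bf_pl INJ_psubsets in auto)

lemma CBp_poly: "poly (CBp Z) z = detn d (\<lambda>r j. \<Sum>l<2*d. Z r l * Bf 1 z j l)"
  using CBp_eval[of 1 z Z] hom_eval_1[OF CBp_deg] by simp

lemma CBp_coeff: "coeff (CBp Z) d = detn d (\<lambda>r j. \<Sum>l<2*d. Z r l * Bf 0 1 j l)"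
  using CBp_eval[of 0 1 Z] hom_eval_01 by simp

lemma XY_dims[simp]: "dim_row (Xm b) = d" "dim_col (Xm b) = d" "dim_row (Ym b) = d" "dim_col (Ym b) = d"
  by (simp_all add: Xm_def Ym_def)

abbreviation X :: "complex \<Rightarrow> complex mat" where "X z \<equiv> Xm (Bf 1 z)"
abbreviation Y :: "complex \<Rightarrow> complex mat" where "Y z \<equiv> Ym (Bf 1 z)"

definition Ap where "Ap = CBp (\<lambda>r l. R r l)"
definition Bp where "Bp = CBp (\<lambda>r l. R (d + r) l)"
definition NP where "NP = Matrix.mat d d (\<lambda>(k,i). CBp (ZN i k))"
definition NP' where "NP' = Matrix.mat d d (\<lambda>(k,i). CBp (ZN' i k))"

lemma NP_carrier[simp]: "NP \<in> carrier_mat d d" and NP'_carrier[simp]: "NP' \<in> carrier_mat d d"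
  by (simp_all add: NP_def NP'_def)

lemma poly_Ap: "poly Ap z = jdet (X z)"
  unfolding Ap_def CBp_poly X_det ..

lemma poly_Bp: "poly Bp z = jdet (Y z)"
  unfolding Bp_def CBp_poly Y_det ..

lemma coeff_Bp: "coeff Bp d = jdet (Ym (Bf 0 1))"
  unfolding Bp_def CBp_coeff Y_det ..

lemma evm_NP: "evm z NP = Y z * adj_mat (X z)"
proof (rule eq_matI)
  show "dim_row (evm z NP) = dim_row (Y z * adj_mat (X z))"
       "dim_col (evm z NP) = dim_col (Y z * adj_mat (X z))"
    using adj_mat(1)[OF Xm_carrier] by (simp_all add: NP_def)
  fix k i assume "k < dim_row (Y z * adj_mat (X z))" "i < dim_col (Y z * adj_mat (X z))"
  then have ki: "k < d" "i < d" using adj_mat(1)[OF Xm_carrier] by auto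
  show "evm z NP $$ (k, i) = (Y z * adj_mat (X z)) $$ (k, i)"
    using ki by (simp add: NP_def CBp_poly ZN_det)
qed

lemma evm_NP': "evm z NP' = X z * adj_mat (Y z)"
proof (rule eq_matI)
  show "dim_row (evm z NP') = dim_row (X z * adj_mat (Y z))"
       "dim_col (evm z NP') = dim_col (X z * adj_mat (Y z))"
    using adj_mat(1)[OF Ym_carrier] by (simp_all add: NP'_def)
  fix k i assume "k < dim_row (X z * adj_mat (Y z))" "i < dim_col (X z * adj_mat (Y z))"
  then have ki: "k < d" "i < d" using adj_mat(1)[OF Ym_carrier] by auto
  show "evm z NP' $$ (k, i) = (X z * adj_mat (Y z)) $$ (k, i)"
    using ki by (simp add: NP'_def CBp_poly ZN'_det)
qed

lemma coeff_NP': "k < d \<Longrightarrow> i < d \<Longrightarrow> coeff (NP' $$ (k,i)) d = (Xm (Bf 0 1) * adj_mat (Ym (Bf 0 1))) $$ (k, i)"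
  by (simp add: NP'_def CBp_coeff ZN'_det)

lemma nz1: "((1::complex), z) \<noteq> (0,0)" and nz0: "((0::complex), (1::complex)) \<noteq> (0,0)" by auto

lemma F0: "Y 0 = 0\<^sub>m d d" "jdet (X 0) \<noteq> 0"
proof -
  have "\<And>r j. r < d \<Longrightarrow> j < d \<Longrightarrow> Yc (Bf 1 0) r j = 0" "detn d (Xc (Bf 1 0)) \<noteq> 0"
    using in_a_coords[OF B0 Bf_indep[OF nz1]] by auto
  then show "Y 0 = 0\<^sub>m d d" "jdet (X 0) \<noteq> 0"
    by (auto simp: Ym_def Xm_def detn_mk intro!: eq_matI)
qed

lemma Finf: "Xm (Bf 0 1) = 0\<^sub>m d d" "jdet (Ym (Bf 0 1)) \<noteq> 0"
proof -
  have "\<And>r j. r < d \<Longrightarrow> j < d \<Longrightarrow> Xc (Bf 0 1) r j = 0" "detn d (Yc (Bf 0 1)) \<noteq> 0"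
    using in_c_coords[OF Binf Bf_indep[OF nz0]] by auto
  then show "Xm (Bf 0 1) = 0\<^sub>m d d" "jdet (Ym (Bf 0 1)) \<noteq> 0"
    by (auto simp: Ym_def Xm_def detn_mk intro!: eq_matI)
qed

lemma F1: "Y 1 = X 1" "jdet (X 1) \<noteq> 0"
proof -
  have "\<And>r j. r < d \<Longrightarrow> j < d \<Longrightarrow> Xc (Bf 1 1) r j = Yc (Bf 1 1) r j" "detn d (Xc (Bf 1 1)) \<noteq> 0"
    using in_ac_coords[OF B1 Bf_indep[OF nz1]] by auto
  then show "Y 1 = X 1" "jdet (X 1) \<noteq> 0"
    by (auto simp: Ym_def Xm_def detn_mk intro!: eq_matI)
qed

end

context ucurve
begin

lemma NP_dims[simp]: "dim_row NP = d" "dim_col NP = d" "dim_row NP' = d" "dim_col NP' = d"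
  by (simp_all add: NP_def NP'_def)

lemma Bp_nz: "Bp \<noteq> 0" and deg_Bp: "degree Bp = d"
proof -
  have c: "coeff Bp d \<noteq> 0" using coeff_Bp Finf(2) by simp
  then show "Bp \<noteq> 0" by auto
  have "d \<le> degree Bp" using c by (rule le_degree)
  then show "degree Bp = d" using CBp_deg[of "\<lambda>r l. R (d + r) l"] unfolding Bp_def by simp
qed

lemma deg_NP': "k < d \<Longrightarrow> i < d \<Longrightarrow> degree (NP' $$ (k,i)) \<le> d - 1"
proof -
  assume ki: "k < d" "i < d"
  have "coeff (NP' $$ (k,i)) d = 0" using ki coeff_NP' Finf(1) adj_mat(1)[OF Ym_carrier]
    by simp
  moreover have "degree (NP' $$ (k,i)) \<le> d" using ki by (simp add: NP'_def CBp_deg)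
  ultimately show ?thesis using deg_le_pred d1 by blast
qed

lemma detNP': "jdet NP' = Ap * Bp ^ (d - 1)"
proof (rule poly_eq_inf[OF infinite_nonroots[OF Bp_nz]])
  fix z assume "z \<in> {z. poly Bp z \<noteq> 0}"
  then have nz: "jdet (Y z) \<noteq> 0" using poly_Bp by simp
  have "poly (jdet NP') z = jdet (evm z NP')" by (simp add: evm_det)
  also have "\<dots> = jdet (X z * adj_mat (Y z))" by (simp add: evm_NP')
  also have "\<dots> = jdet (X z) * jdet (adj_mat (Y z))"
    by (rule det_mult[OF Xm_carrier adj_mat(1)[OF Ym_carrier]])
  also have "\<dots> = jdet (X z) * jdet (Y z) ^ (d - 1)"
    using det_adj[OF Ym_carrier nz d1] by simp
  also have "\<dots> = poly (Ap * Bp ^ (d - 1)) z" by (simp add: poly_Ap poly_Bp)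
  finally show "poly (jdet NP') z = poly (Ap * Bp ^ (d - 1)) z" .
qed

lemma Ap_nz: "Ap \<noteq> 0"
  using poly_Ap[of 0] F0(2) by auto

lemma deg_Ap: "degree Ap = 0"
proof -
  have "degree (jdet NP') \<le> (d - 1) * d"
    by (rule degree_det_le[OF _ NP'_carrier]) (use deg_NP' in force)
  moreover have "degree (Ap * Bp ^ (d - 1)) = degree Ap + (d - 1) * d"
    using Ap_nz Bp_nz by (simp add: degree_mult_eq degree_power_eq deg_Bp)
  ultimately show ?thesis using detNP' by simp
qed

definition \<alpha>0 where "\<alpha>0 = jdet (X 0)"

lemma detX: "jdet (X z) = \<alpha>0"
  using deg0_const[OF deg_Ap, of z 0] by (simp add: poly_Ap \<alpha>0_def)

lemma \<alpha>0_nz: "\<alpha>0 \<noteq> 0" using F0(2) by (simp add: \<alpha>0_def)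

lemma NP_at0: "k < d \<Longrightarrow> i < d \<Longrightarrow> poly (NP $$ (k,i)) 0 = 0"
proof -
  assume ki: "k < d" "i < d"
  have "poly (NP $$ (k,i)) 0 = evm 0 NP $$ (k,i)" using ki by (simp add: NP_def)
  also have "\<dots> = (Y 0 * adj_mat (X 0)) $$ (k,i)" by (simp add: evm_NP)
  also have "\<dots> = 0" using ki by (simp add: F0(1))
  finally show ?thesis .
qed

definition GP where "GP = Matrix.mat d d (\<lambda>(k,i). Polynomial.smult (1 / \<alpha>0) (NP $$ (k,i) div [:0,1:]))"

lemma GP_carrier[simp]: "GP \<in> carrier_mat d d" by (simp add: GP_def)
lemma GP_dims[simp]: "dim_row GP = d" "dim_col GP = d" by (simp_all add: GP_def)

abbreviation G where "G z \<equiv> evm z GP"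

lemma G_carrier[simp]: "G z \<in> carrier_mat d d" by simp

lemma evm_NP_G: "evm z NP = (z * \<alpha>0) \<cdot>\<^sub>m G z"
proof (rule eq_matI)
  fix k i assume "k < dim_row ((z * \<alpha>0) \<cdot>\<^sub>m G z)" "i < dim_col ((z * \<alpha>0) \<cdot>\<^sub>m G z)"
  then have ki: "k < d" "i < d" by (auto simp: GP_def)
  have e: "NP $$ (k,i) = [:0,1:] * (NP $$ (k,i) div [:0,1:])" by (rule div_x[OF NP_at0[OF ki]])
  have "poly (NP $$ (k,i)) z = z * poly (NP $$ (k,i) div [:0,1:]) z"
    by (subst e) simp
  then show "evm z NP $$ (k,i) = ((z * \<alpha>0) \<cdot>\<^sub>m G z) $$ (k,i)"
    using ki \<alpha>0_nz by (simp add: GP_def)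
qed (auto simp: NP_def GP_def)

lemma NX: "evm z NP * X z = \<alpha>0 \<cdot>\<^sub>m Y z"
proof -
  have "evm z NP * X z = Y z * (adj_mat (X z) * X z)"
    by (simp add: evm_NP assoc_mult_mat[OF Ym_carrier adj_mat(1)[OF Xm_carrier] Xm_carrier])
  also have "\<dots> = Y z * (\<alpha>0 \<cdot>\<^sub>m 1\<^sub>m d)" using adj_mat(3)[OF Xm_carrier] detX by simp
  also have "\<dots> = \<alpha>0 \<cdot>\<^sub>m Y z" by (simp add: mult_smult_distrib[OF Ym_carrier one_carrier_mat])
  finally show ?thesis .
qed

lemma Y_G: "Y z = z \<cdot>\<^sub>m (G z * X z)"
proof -
  have "\<alpha>0 \<cdot>\<^sub>m Y z = ((z * \<alpha>0) \<cdot>\<^sub>m G z) * X z" using NX evm_NP_G by simp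
  also have "\<dots> = (z * \<alpha>0) \<cdot>\<^sub>m (G z * X z)" by (rule mult_smult_assoc_mat[OF G_carrier Xm_carrier])
  finally have "(1 / \<alpha>0) \<cdot>\<^sub>m (\<alpha>0 \<cdot>\<^sub>m Y z) = (1 / \<alpha>0) \<cdot>\<^sub>m ((z * \<alpha>0) \<cdot>\<^sub>m (G z * X z))" by simp
  then have "1 \<cdot>\<^sub>m Y z = z \<cdot>\<^sub>m (G z * X z)" using \<alpha>0_nz by (simp add: smult_smult_mat)
  moreover have "1 \<cdot>\<^sub>m Y z = Y z" by (rule eq_matI) auto
  ultimately show ?thesis by simp
qed

lemma Bp_G: "Bp = Polynomial.smult \<alpha>0 ([:0,1:] ^ d * jdet GP)"
proof (rule poly_eq_inf[of UNIV])
  show "infinite (UNIV :: complex set)" by (rule infinite_UNIV_char_0)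
  fix z :: complex
  have "poly Bp z = jdet (Y z)" by (rule poly_Bp)
  also have "\<dots> = z ^ d * (jdet (G z) * jdet (X z))"
    by (simp add: Y_G det_mult[OF G_carrier Xm_carrier])
  also have "\<dots> = poly (Polynomial.smult \<alpha>0 ([:0,1:] ^ d * jdet GP)) z"
    by (simp add: detX evm_det)
  finally show "poly Bp z = poly (Polynomial.smult \<alpha>0 ([:0,1:] ^ d * jdet GP)) z" .
qed

lemma detGP_nz: "jdet GP \<noteq> 0" using Bp_nz Bp_G by auto

lemma deg_detGP: "degree (jdet GP) = 0"
proof -
  have "degree Bp = d + degree (jdet GP)"
    unfolding Bp_G using \<alpha>0_nz detGP_nz by (simp add: degree_mult_eq degree_power_eq)
  then show ?thesis using deg_Bp by simp
qed

definition g0 where "g0 = jdet (G 0)"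

lemma detG: "jdet (G z) = g0"
  unfolding g0_def evm_det using deg0_const[OF deg_detGP] .

lemma g0_nz: "g0 \<noteq> 0"
proof -
  have "coeff (jdet GP) 0 \<noteq> 0" using detGP_nz deg_detGP leading_coeff_0_iff by metis
  then show ?thesis unfolding g0_def evm_det by (simp add: poly_altdef deg_detGP)
qed

end

lemma one_smult_mat'[simp]: "1 \<cdot>\<^sub>m A = (A :: 'a::comm_ring_1 mat)"
  by (rule eq_matI) auto

lemma smult_inj_mat:
  fixes A B :: "complex mat"
  assumes "a \<cdot>\<^sub>m A = a \<cdot>\<^sub>m B" "a \<noteq> 0"
  shows "A = B"
proof -
  have "(1/a) \<cdot>\<^sub>m (a \<cdot>\<^sub>m A) = (1/a) \<cdot>\<^sub>m (a \<cdot>\<^sub>m B)" using assms(1) by simp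
  then show ?thesis using assms(2) by (simp add: smult_smult_mat)
qed

context ucurve
begin

lemma detG'[simp]: "poly (jdet GP) z = g0"
  using detG[of z] by (simp add: evm_det)

lemma NY: "evm z NP' * Y z = jdet (Y z) \<cdot>\<^sub>m X z"
proof -
  have "evm z NP' * Y z = X z * (adj_mat (Y z) * Y z)"
    by (simp add: evm_NP' assoc_mult_mat[OF Xm_carrier adj_mat(1)[OF Ym_carrier] Ym_carrier])
  also have "\<dots> = X z * (jdet (Y z) \<cdot>\<^sub>m 1\<^sub>m d)" using adj_mat(3)[OF Ym_carrier] by simp
  also have "\<dots> = jdet (Y z) \<cdot>\<^sub>m X z" by (simp add: mult_smult_distrib[OF Xm_carrier one_carrier_mat])
  finally show ?thesis .
qed

lemma detY: "jdet (Y z) = z ^ d * g0 * \<alpha>0"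
proof -
  have "jdet (Y z) = jdet (z \<cdot>\<^sub>m (G z * X z))" using Y_G[of z] by (rule arg_cong)
  also have "\<dots> = z ^ d * jdet (G z * X z)" by (simp add: det_smult)
  also have "jdet (G z * X z) = jdet (G z) * jdet (X z)" by (rule det_mult[OF G_carrier Xm_carrier])
  also have "jdet (G z) = g0" by (rule detG)
  also have "jdet (X z) = \<alpha>0" by (rule detX)
  finally show ?thesis by simp
qed

lemma XadjX: "X z * adj_mat (X z) = \<alpha>0 \<cdot>\<^sub>m 1\<^sub>m d"
proof -
  have "X z * adj_mat (X z) = jdet (X z) \<cdot>\<^sub>m 1\<^sub>m d" by (rule adj_mat(2)[OF Xm_carrier])
  then show ?thesis by (simp only: detX)
qed

lemma NG:
  assumes z: "z \<noteq> 0"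
  shows "evm z NP' * G z = (\<alpha>0 * g0 * z ^ (d - 1)) \<cdot>\<^sub>m 1\<^sub>m d"
proof -
  let ?N = "evm z NP'"
  have Nc: "?N \<in> carrier_mat d d" by simp
  have NGc: "?N * G z \<in> carrier_mat d d" by (rule mult_carrier_mat[OF Nc G_carrier])
  have "z \<cdot>\<^sub>m ((?N * G z) * X z) = jdet (Y z) \<cdot>\<^sub>m X z"
  proof -
    have "?N * Y z = ?N * (z \<cdot>\<^sub>m (G z * X z))" by (simp add: Y_G)
    also have "\<dots> = z \<cdot>\<^sub>m (?N * (G z * X z))"
      by (rule mult_smult_distrib[OF Nc mult_carrier_mat[OF G_carrier Xm_carrier]])
    also have "?N * (G z * X z) = (?N * G z) * X z"
      by (rule assoc_mult_mat[symmetric, OF Nc G_carrier Xm_carrier])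
    finally show ?thesis using NY by simp
  qed
  then have "(z \<cdot>\<^sub>m ((?N * G z) * X z)) * adj_mat (X z) = (jdet (Y z) \<cdot>\<^sub>m X z) * adj_mat (X z)"
    by simp
  moreover have "(z \<cdot>\<^sub>m ((?N * G z) * X z)) * adj_mat (X z) = (z * \<alpha>0) \<cdot>\<^sub>m (?N * G z)"
  proof -
    have "(z \<cdot>\<^sub>m ((?N * G z) * X z)) * adj_mat (X z) = z \<cdot>\<^sub>m (((?N * G z) * X z) * adj_mat (X z))"
      by (rule mult_smult_assoc_mat[of _ d d _ d]) (auto intro: adj_mat(1)[OF Xm_carrier])
    also have "((?N * G z) * X z) * adj_mat (X z) = (?N * G z) * (X z * adj_mat (X z))"
      by (rule assoc_mult_mat[OF NGc Xm_carrier adj_mat(1)[OF Xm_carrier]])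
    also have "\<dots> = (?N * G z) * (\<alpha>0 \<cdot>\<^sub>m 1\<^sub>m d)" by (simp add: XadjX)
    also have "\<dots> = \<alpha>0 \<cdot>\<^sub>m (?N * G z)" by (simp add: mult_smult_distrib[OF NGc one_carrier_mat])
    finally show ?thesis by (simp add: smult_smult_mat)
  qed
  moreover have "(jdet (Y z) \<cdot>\<^sub>m X z) * adj_mat (X z) = (z * \<alpha>0) \<cdot>\<^sub>m ((\<alpha>0 * g0 * z ^ (d - 1)) \<cdot>\<^sub>m 1\<^sub>m d)"
  proof -
    have "(jdet (Y z) \<cdot>\<^sub>m X z) * adj_mat (X z) = jdet (Y z) \<cdot>\<^sub>m (X z * adj_mat (X z))"
      by (rule mult_smult_assoc_mat[OF Xm_carrier adj_mat(1)[OF Xm_carrier]])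
    also have "\<dots> = (jdet (Y z) * \<alpha>0) \<cdot>\<^sub>m 1\<^sub>m d" by (simp add: XadjX smult_smult_mat)
    also have "jdet (Y z) * \<alpha>0 = (z * \<alpha>0) * (\<alpha>0 * g0 * z ^ (d - 1))"
    proof -
      have "z ^ d = z * z ^ (d - 1)" using d1 by (simp add: power_eq_if)
      then show ?thesis by (simp add: detY)
    qed
    finally show ?thesis by (simp add: smult_smult_mat)
  qed
  ultimately have "(z * \<alpha>0) \<cdot>\<^sub>m (?N * G z) = (z * \<alpha>0) \<cdot>\<^sub>m ((\<alpha>0 * g0 * z ^ (d - 1)) \<cdot>\<^sub>m 1\<^sub>m d)"
    by simp
  then show ?thesis by (rule smult_inj_mat) (use z \<alpha>0_nz in simp)
qed

definition cP where "cP = Polynomial.smult (\<alpha>0 * g0) ([:0,1:] ^ (d - 1))"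

lemma NP'GP: "NP' * GP = cP \<cdot>\<^sub>m 1\<^sub>m d"
proof (rule eq_matI)
  fix k i assume "k < dim_row (cP \<cdot>\<^sub>m 1\<^sub>m d)" "i < dim_col (cP \<cdot>\<^sub>m 1\<^sub>m d)"
  then have ki: "k < d" "i < d" by auto
  have inf: "infinite {z::complex. z \<noteq> 0}"
  proof -
    have "{z::complex. z \<noteq> 0} = UNIV - {0}" by auto
    then show ?thesis using infinite_UNIV_char_0[where 'a=complex] by simp
  qed
  show "(NP' * GP) $$ (k,i) = (cP \<cdot>\<^sub>m 1\<^sub>m d) $$ (k,i)"
  proof (rule poly_eq_inf[OF inf])
    fix z :: complex assume "z \<in> {z. z \<noteq> 0}"
    then have z: "z \<noteq> 0" by simp
    have "poly ((NP' * GP) $$ (k,i)) z = evm z (NP' * GP) $$ (k,i)" using ki by simp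
    also have "\<dots> = (evm z NP' * G z) $$ (k,i)" by (simp add: evm_mult[OF NP'_carrier GP_carrier])
    also have "\<dots> = ((\<alpha>0 * g0 * z ^ (d - 1)) \<cdot>\<^sub>m 1\<^sub>m d) $$ (k,i)" by (simp add: NG[OF z])
    also have "\<dots> = poly ((cP \<cdot>\<^sub>m 1\<^sub>m d) $$ (k,i)) z" using ki by (simp add: cP_def)
    finally show "poly ((NP' * GP) $$ (k,i)) z = poly ((cP \<cdot>\<^sub>m 1\<^sub>m d) $$ (k,i)) z" .
  qed
qed auto

lemma adj_deg0: "k < d \<Longrightarrow> i < d \<Longrightarrow> degree (adj_mat GP $$ (k,i)) = 0"
proof -
  assume ki: "k < d" "i < d"
  have adjc: "adj_mat GP \<in> carrier_mat d d" by (rule adj_mat(1)[OF GP_carrier])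
  have "(NP' * GP) * adj_mat GP = NP' * (GP * adj_mat GP)"
    by (rule assoc_mult_mat[OF NP'_carrier GP_carrier adjc])
  also have "\<dots> = NP' * (jdet GP \<cdot>\<^sub>m 1\<^sub>m d)" using adj_mat(2)[OF GP_carrier] by simp
  also have "\<dots> = jdet GP \<cdot>\<^sub>m NP'" by (simp add: mult_smult_distrib[OF NP'_carrier one_carrier_mat])
  finally have e1: "(NP' * GP) * adj_mat GP = jdet GP \<cdot>\<^sub>m NP'" .
  have "(NP' * GP) * adj_mat GP = (cP \<cdot>\<^sub>m 1\<^sub>m d) * adj_mat GP" by (simp add: NP'GP)
  also have "\<dots> = cP \<cdot>\<^sub>m (1\<^sub>m d * adj_mat GP)" by (rule mult_smult_assoc_mat[OF one_carrier_mat adjc])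
  also have "\<dots> = cP \<cdot>\<^sub>m adj_mat GP" using adjc by simp
  finally have "cP \<cdot>\<^sub>m adj_mat GP = jdet GP \<cdot>\<^sub>m NP'" using e1 by simp
  then have "(cP \<cdot>\<^sub>m adj_mat GP) $$ (k,i) = (jdet GP \<cdot>\<^sub>m NP') $$ (k,i)" by simp
  then have e: "cP * adj_mat GP $$ (k,i) = jdet GP * NP' $$ (k,i)" using ki by simp
  have "degree (jdet GP * NP' $$ (k,i)) \<le> d - 1"
    using degree_mult_le[of "jdet GP" "NP' $$ (k,i)"] deg_detGP deg_NP'[OF ki] by simp
  moreover have cP_nz: "cP \<noteq> 0" and deg_cP: "degree cP = d - 1"
    using \<alpha>0_nz g0_nz by (auto simp: cP_def degree_power_eq)
  ultimately show ?thesis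
  proof (cases "adj_mat GP $$ (k,i) = 0")
    case False
    then have "degree (cP * adj_mat GP $$ (k,i)) = d - 1 + degree (adj_mat GP $$ (k,i))"
      using cP_nz deg_cP by (simp add: degree_mult_eq)
    then show ?thesis using e \<open>degree (jdet GP * NP' $$ (k,i)) \<le> d - 1\<close> by simp
  qed simp
qed

definition Gm where "Gm = evm 0 (adj_mat GP)"

lemma evm_adj: "evm z (adj_mat GP) = Gm"
  unfolding Gm_def
proof (rule eq_matI)
  fix k i assume "k < dim_row (evm 0 (adj_mat GP))" "i < dim_col (evm 0 (adj_mat GP))"
  then have ki: "k < d" "i < d" by auto
  have "poly (adj_mat GP $$ (k,i)) z = poly (adj_mat GP $$ (k,i)) 0"
    by (rule deg0_const[OF adj_deg0[OF ki]])
  then show "evm z (adj_mat GP) $$ (k,i) = evm 0 (adj_mat GP) $$ (k,i)"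
    using ki by simp
qed auto

lemma Gm_carrier[simp]: "Gm \<in> carrier_mat d d"
  using adj_mat(1)[OF GP_carrier] by (simp only: Gm_def map_carrier_mat)

lemma GGm: "G z * Gm = g0 \<cdot>\<^sub>m 1\<^sub>m d"
proof -
  have "evm z (GP * adj_mat GP) = G z * Gm"
    by (simp add: evm_mult[OF GP_carrier adj_mat(1)[OF GP_carrier]] evm_adj)
  moreover have "evm z (GP * adj_mat GP) = g0 \<cdot>\<^sub>m 1\<^sub>m d"
    using adj_mat(2)[OF GP_carrier] detG[of z] by (simp add: evm_smult evm_one evm_det)
  ultimately show ?thesis by simp
qed

lemma GmG: "Gm * G 0 = g0 \<cdot>\<^sub>m 1\<^sub>m d"
proof -
  have "evm 0 (adj_mat GP * GP) = Gm * G 0"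
    by (simp add: evm_mult[OF adj_mat(1)[OF GP_carrier] GP_carrier] evm_adj)
  moreover have "evm 0 (adj_mat GP * GP) = g0 \<cdot>\<^sub>m 1\<^sub>m d"
    using adj_mat(3)[OF GP_carrier] detG[of 0] by (simp add: evm_smult evm_one evm_det)
  ultimately show ?thesis by simp
qed

lemma G_const: "G z = G 0"
proof -
  have "G z = G z * 1\<^sub>m d" by simp
  also have "1\<^sub>m d = (1 / g0) \<cdot>\<^sub>m (Gm * G 0)" using g0_nz by (simp add: GmG smult_smult_mat)
  also have "G z * \<dots> = (1 / g0) \<cdot>\<^sub>m (G z * (Gm * G 0))"
    by (rule mult_smult_distrib[OF G_carrier mult_carrier_mat[OF Gm_carrier G_carrier]])
  also have "G z * (Gm * G 0) = (G z * Gm) * G 0"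
    by (rule assoc_mult_mat[symmetric, OF G_carrier Gm_carrier G_carrier])
  also have "\<dots> = g0 \<cdot>\<^sub>m G 0" by (simp add: GGm mult_smult_assoc_mat[OF one_carrier_mat G_carrier])
  finally show ?thesis using g0_nz by (simp add: smult_smult_mat)
qed

lemma G0_one: "G 0 = 1\<^sub>m d"
proof -
  have K: "G 0 * X 1 = X 1" using Y_G[of 1] F1(1) G_const[of 1] by simp
  have inv: "X 1 * ((1 / \<alpha>0) \<cdot>\<^sub>m adj_mat (X 1)) = 1\<^sub>m d"
    using \<alpha>0_nz by (simp add: mult_smult_distrib[OF Xm_carrier adj_mat(1)[OF Xm_carrier]] XadjX smult_smult_mat)
  have "G 0 = G 0 * (X 1 * ((1 / \<alpha>0) \<cdot>\<^sub>m adj_mat (X 1)))" using inv by simp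
  also have "\<dots> = (G 0 * X 1) * ((1 / \<alpha>0) \<cdot>\<^sub>m adj_mat (X 1))"
    by (rule assoc_mult_mat[symmetric]) (auto intro: adj_mat(1)[OF Xm_carrier])
  also have "\<dots> = 1\<^sub>m d" using K inv by simp
  finally show ?thesis .
qed

lemma Y_eq: "Y z = z \<cdot>\<^sub>m X z"
  using Y_G[of z] G_const[of z] G0_one by simp

theorem uniq_span: "spn d (Bf 1 z) = spn d (\<lambda>j i. a j i + z * c j i)"
proof (rule transform_spn_indep(1))
  show "detn d (Xc (Bf 1 z)) \<noteq> 0" using detX[of z] \<alpha>0_nz by (simp add: detn_mk Xm_def)
  fix j assume j: "j < d"
  have bc: "Bf 1 z j \<in> cvec (2*d)" using Bf_cvec[OF nz1 j] .
  have Yr: "Yc (Bf 1 z) r j = z * Xc (Bf 1 z) r j" if "r < d" for r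
  proof -
    have "Y z $$ (r,j) = (z \<cdot>\<^sub>m X z) $$ (r,j)" by (simp add: Y_eq)
    then show ?thesis using that j by (simp add: Xm_def Ym_def)
  qed
  have "Bf 1 z j = (\<lambda>i. lincomb d (\<lambda>r. Xc (Bf 1 z) r j) a i + lincomb d (\<lambda>r. Yc (Bf 1 z) r j) c i)"
    by (rule XY_decomp[where b="Bf 1 z" and j=j, OF bc])
  also have "\<dots> = lincomb d (\<lambda>r. Xc (Bf 1 z) r j) (\<lambda>j i. a j i + z * c j i)"
  proof (rule ext)
    fix i
    have "lincomb d (\<lambda>r. Yc (Bf 1 z) r j) c i = (\<Sum>r<d. z * Xc (Bf 1 z) r j * c r i)"
      unfolding lincomb_def by (rule sum.cong) (simp_all add: Yr)
    then show "lincomb d (\<lambda>r. Xc (Bf 1 z) r j) a i + lincomb d (\<lambda>r. Yc (Bf 1 z) r j) c i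
        = lincomb d (\<lambda>r. Xc (Bf 1 z) r j) (\<lambda>j i. a j i + z * c j i) i"
      by (simp add: lincomb_def distrib_left sum.distrib mult_ac)
  qed
  finally show "Bf 1 z j = lincomb d (\<lambda>r. Xc (Bf 1 z) r j) (\<lambda>j i. a j i + z * c j i)" .
qed

end

lemma spn_cong: "(\<And>j. j < k \<Longrightarrow> e j = e' j) \<Longrightarrow> spn k e = spn k e'"
  unfolding spn_def using lincomb_cong2[of k e e'] by auto

lemma detn_diag: "detn n (\<lambda>r j. if r = j then x else 0) = x ^ n"
proof -
  have "mk n (\<lambda>r j. if r = j then x else 0) = x \<cdot>\<^sub>m 1\<^sub>m n" by (rule eq_matI) auto
  then show ?thesis by (simp add: detn_mk)
qed

lemma lincomb_diag: assumes "j < k" shows "lincomb k (\<lambda>r. if r = j then x else 0) e = (\<lambda>i. x * e j i)"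
  unfolding lincomb_def
proof (rule ext)
  fix i
  have "(\<Sum>r<k. (if r = j then x else 0) * e r i) = (\<Sum>r<k. (if r = j then 1 else 0) * (x * e r i))"
    by (rule sum.cong) auto
  then show "(\<Sum>r<k. (if r = j then x else 0) * e r i) = x * e j i"
    using sum_delta_mult[OF assms, of "\<lambda>r. x * e r i"] by simp
qed

lemma lincomb_add_fam: "lincomb k x (\<lambda>j i. e j i + f j i) = (\<lambda>i. lincomb k x e i + lincomb k x f i)"
  by (rule ext) (simp add: lincomb_def distrib_left sum.distrib)

lemma lincomb_scale_fam: "lincomb k x (\<lambda>j i. z * f j i) = (\<lambda>i. z * lincomb k x f i)"
  by (rule ext) (simp add: lincomb_def sum_distrib_left mult_ac)

lemma lincomb_in_spn_of:
  assumes "\<And>j. j < k \<Longrightarrow> b j = lincomb m (\<lambda>r. T r j) e"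
  shows "lincomb k x b \<in> spn m e"
proof -
  have "lincomb k x b = lincomb k x (\<lambda>j. lincomb m (\<lambda>r. T r j) e)"
    by (rule lincomb_cong2) (simp add: assms)
  then show ?thesis by (simp add: lincomb_lincomb lincomb_in_spn)
qed

lemma bform_lin_left:
  "bform n om (\<lambda>i. p * x i + q * y i) w = p * bform n om x w + q * bform n om y w"
  unfolding bform_def by (simp add: algebra_simps sum.distrib sum_distrib_left)

lemma bform_lin_right:
  "bform n om w (\<lambda>i. p * x i + q * y i) = p * bform n om w x + q * bform n om w y"
  unfolding bform_def by (simp add: algebra_simps sum.distrib sum_distrib_left)

lemma bform_lincomb_left: "bform n om (lincomb k x e) w = (\<Sum>j<k. x j * bform n om (e j) w)"
  unfolding bform_def lincomb_def
  by (simp add: sum_distrib_left sum_distrib_right mult_ac sum.swap[of _ "{..<k}"])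

lemma bform_lincomb_right: "bform n om w (lincomb k x e) = (\<Sum>j<k. x j * bform n om w (e j))"
  unfolding bform_def lincomb_def
  by (simp add: sum_distrib_left sum_distrib_right mult_ac sum.swap[of _ "{..<k}"])

lemma indep_az:
  assumes ia: "indep d a" and int: "spn d a \<inter> spn d c = {\<lambda>_. 0}"
  shows "indep d (\<lambda>j i. a j i + z * c j i)"
  unfolding indep_def
proof (intro allI impI)
  fix x j assume x: "lincomb d x (\<lambda>j i. a j i + z * c j i) = (\<lambda>_. 0)" and j: "j < d"
  have x2: "(\<lambda>i. lincomb d x a i + z * lincomb d x c i) = (\<lambda>_. 0)"
    using x by (simp add: lincomb_add_fam lincomb_scale_fam)
  have "lincomb d x a = lincomb d (\<lambda>j. - z * x j) c"
  proof (rule ext)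
    fix i
    have "lincomb d x a i + z * lincomb d x c i = 0" using fun_cong[OF x2, of i] by simp
    then have "lincomb d x a i = - (z * lincomb d x c i)" by (simp add: eq_neg_iff_add_eq_0)
    then show "lincomb d x a i = lincomb d (\<lambda>j. - z * x j) c i"
      by (simp add: lincomb_def sum_distrib_left mult_ac sum_negf)
  qed
  then have "lincomb d x a \<in> spn d c" by (simp only:) (rule lincomb_in_spn)
  then have "lincomb d x a \<in> spn d a \<inter> spn d c" using lincomb_in_spn[of d x a] by blast
  then have "lincomb d x a = (\<lambda>_. 0)" using int by auto
  then show "x j = 0" using ia j unfolding indep_def by blast
qed

lemma hom_eval_lin': "hom_eval (Suc 0) [:x, y:] s t = s * x + t * y"
  by (simp add: hom_eval_def)

definition Pd :: "(nat \<Rightarrow> nat \<Rightarrow> complex) \<Rightarrow> (nat \<Rightarrow> nat \<Rightarrow> complex) \<Rightarrow> nat \<Rightarrow> nat set \<Rightarrow> complex poly" where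
  "Pd a c d I = (\<Sum>p\<in>{p. p permutes {0..<d}}. Polynomial.smult (of_int (sign p))
      (\<Prod>r<d. [: a (p r) (sorted_list_of_set I ! r), c (p r) (sorted_list_of_set I ! r) :]))"

lemma Pd_props:
  "degree (Pd a c d I) \<le> d \<and>
   hom_eval d (Pd a c d I) s t = plucker d (\<lambda>j i. s * a j i + t * c j i) I"
proof -
  let ?L = "\<lambda>p r. [: a (p r) (sorted_list_of_set I ! r), c (p r) (sorted_list_of_set I ! r) :]"
  have H: "hom_eval (card {..<d}) (\<Prod>r<d. ?L p r) s t = (\<Prod>r<d. hom_eval 1 (?L p r) s t)
      \<and> degree (\<Prod>r<d. ?L p r) \<le> card {..<d}" for p
    by (rule hom_eval_prod) auto
  have "degree (Pd a c d I) \<le> d"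
    unfolding Pd_def
    by (rule degree_sum_le[OF finite_permutations[OF finite_atLeastLessThan]]) (use H in \<open>auto intro: order_trans[OF degree_smult_le]\<close>)
  moreover have "hom_eval d (Pd a c d I) s t = plucker d (\<lambda>j i. s * a j i + t * c j i) I"
    unfolding Pd_def hom_eval_sum hom_eval_smult plucker_def detn_def
    by (rule sum.cong) (use H in \<open>auto simp: hom_eval_lin'\<close>)
  ultimately show ?thesis by blast
qed

lemma existence:
  assumes d1: "1 \<le> d" and fr: "frame d a c R"
    and ia: "indep d a" and ic: "indep d c" and int: "spn d a \<inter> spn d c = {\<lambda>_. 0}"
    and isoA: "\<And>x y. x \<in> spn d a \<Longrightarrow> y \<in> spn d a \<Longrightarrow> bform (2*d) om x y = 0"
    and isoC: "\<And>x y. x \<in> spn d c \<Longrightarrow> y \<in> spn d c \<Longrightarrow> bform (2*d) om x y = 0"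
    and isoV: "\<And>j j'. j < d \<Longrightarrow> j' < d \<Longrightarrow> bform (2*d) om (\<lambda>i. a j i + c j i) (\<lambda>i. a j' i + c j' i) = 0"
    and g_def: "g = (\<lambda>x. case x of None \<Rightarrow> spn d c | Some z \<Rightarrow> spn d (\<lambda>j i. a j i + z * c j i))"
  shows "LG_morphism_deg d om g d"
proof -
  interpret F: frame d a c R by (rule fr)
  define B where "B s t = (\<lambda>j i. s * a j i + t * c j i)" for s t :: complex
  have Bcvec: "B s t j \<in> cvec (2*d)" if "j < d" for s t j
    using F.a_cvec[OF that] F.c_cvec[OF that] by (auto simp: B_def cvec_def)
  have ecvec: "(\<lambda>i. a j i + z * c j i) \<in> cvec (2*d)" if "j < d" for z j
    using F.a_cvec[OF that] F.c_cvec[OF that] by (auto simp: cvec_def)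
  have basis: "is_basis (2*d) d (g (p1pt s t)) (B s t)" if st: "(s,t) \<noteq> (0,0)" for s t
  proof (cases "s = 0")
    case True
    then have t: "t \<noteq> 0" using st by auto
    have Bj: "B s t j = lincomb d (\<lambda>r. if r = j then t else 0) c" if "j < d" for j
      using True lincomb_diag[OF that, of t c] by (simp add: B_def)
    have dT: "detn d (\<lambda>r j. if r = j then t else 0) \<noteq> 0" using t by (simp add: detn_diag)
    have "g (p1pt s t) = spn d c" using True by (simp add: g_def p1pt_def)
    then show ?thesis unfolding is_basis_alt
      using transform_spn_indep[OF Bj dT] ic Bcvec by auto
  next
    case False
    let ?e = "\<lambda>j i. a j i + t / s * c j i"
    have Bj: "B s t j = lincomb d (\<lambda>r. if r = j then s else 0) ?e" if "j < d" for j
      using False lincomb_diag[OF that, of s ?e] by (auto simp: B_def field_simps)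
    have dT: "detn d (\<lambda>r j. if r = j then s else 0) \<noteq> 0" using False by (simp add: detn_diag)
    have "g (p1pt s t) = spn d ?e" using False by (simp add: g_def p1pt_def)
    then show ?thesis unfolding is_basis_alt
      using transform_spn_indep[OF Bj dT] indep_az[OF ia int, of "t / s"] Bcvec by auto
  qed
  have nocommon: "\<exists>I\<in>psubsets d. hom_eval d (Pd a c d I) s t \<noteq> 0" if st: "(s,t) \<noteq> (0,0)" for s t
  proof (rule ccontr)
    assume "\<not> ?thesis"
    then have z: "plucker d (B s t) I = 0" if "I \<in> psubsets d" for I
      using that Pd_props[of a c d I s t] by (auto simp: B_def)
    have detz: "detn d (\<lambda>r j. \<Sum>l<2*d. Z r l * B s t j l) = 0" for Z
      unfolding cauchy_binet by (rule sum.neutral) (use z INJ_psubsets in auto)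
    have XB: "(\<Sum>l<2*d. R r l * B s t j l) = (if r = j then s else 0)" if "r < d" "j < d" for r j
    proof -
      have "(\<Sum>l<2*d. R r l * B s t j l) = s * (\<Sum>l<2*d. R r l * a j l) + t * (\<Sum>l<2*d. R r l * c j l)"
        by (simp add: B_def distrib_left sum.distrib sum_distrib_left mult_ac)
      then show ?thesis using that F.Ra[of r j] F.Rc[of r j] by simp
    qed
    have YB: "(\<Sum>l<2*d. R (d + r) l * B s t j l) = (if r = j then t else 0)" if "r < d" "j < d" for r j
    proof -
      have "(\<Sum>l<2*d. R (d + r) l * B s t j l) = s * (\<Sum>l<2*d. R (d + r) l * a j l) + t * (\<Sum>l<2*d. R (d + r) l * c j l)"
        by (simp add: B_def distrib_left sum.distrib sum_distrib_left mult_ac)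
      then show ?thesis using that F.Ra[of "d + r" j] F.Rc[of "d + r" j] by simp
    qed
    have "s ^ d = 0"
    proof -
      have "detn d (\<lambda>r j. \<Sum>l<2*d. R r l * B s t j l) = detn d (\<lambda>r j. if r = j then s else 0)"
        by (rule detn_cong) (simp add: XB)
      then show ?thesis using detz[of R] by (simp add: detn_diag)
    qed
    moreover have "t ^ d = 0"
    proof -
      have "detn d (\<lambda>r j. \<Sum>l<2*d. R (d + r) l * B s t j l) = detn d (\<lambda>r j. if r = j then t else 0)"
        by (rule detn_cong) (simp add: YB)
      then show ?thesis using detz[of "\<lambda>r l. R (d + r) l"] by (simp add: detn_diag)
    qed
    ultimately show False using st by simp
  qed
  have grass: "grass_morphism_deg d g d"
    unfolding grass_morphism_deg_def
  proof (intro exI[of _ "Pd a c d"] conjI allI impI)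
    show "degree (Pd a c d I) \<le> d" for I using Pd_props by blast
    show "\<exists>I\<in>psubsets d. hom_eval d (Pd a c d I) s t \<noteq> 0" if "(s, t) \<noteq> (0, 0)" for s t
      using nocommon[OF that] .
    show "\<exists>b. is_basis (2 * d) d (g (p1pt s t)) b \<and> (\<forall>I\<in>psubsets d. plucker d b I = hom_eval d (Pd a c d I) s t)"
      if "(s, t) \<noteq> (0, 0)" for s t
      using basis[OF that] Pd_props by (auto simp: B_def)
  qed
  have isoE: "bform (2*d) om (\<lambda>i. a j i + z * c j i) (\<lambda>i. a j' i + z * c j' i) = 0"
    if j: "j < d" "j' < d" for z j j'
  proof -
    have aa: "bform (2*d) om (a j) (a j') = 0" using isoA e_in_spn j by blast
    have cc: "bform (2*d) om (c j) (c j') = 0" using isoC e_in_spn j by blast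
    have v: "bform (2*d) om (a j) (c j') + bform (2*d) om (c j) (a j') = 0"
      using isoV[OF j] bform_lin_left[of "2*d" om 1 "a j" 1 "c j"]
        bform_lin_right[of "2*d" om _ 1 "a j'" 1 "c j'"] aa cc by simp
    have "bform (2*d) om (\<lambda>i. a j i + z * c j i) (\<lambda>i. a j' i + z * c j' i)
        = bform (2*d) om (a j) (a j') + z * (bform (2*d) om (a j) (c j') + bform (2*d) om (c j) (a j'))
          + z * z * bform (2*d) om (c j) (c j')"
      using bform_lin_left[of "2*d" om 1 "a j" z "c j"]
        bform_lin_right[of "2*d" om _ 1 "a j'" z "c j'"] by (simp add: algebra_simps)
    then show ?thesis using aa cc v by simp
  qed
  have LG: "in_LG d om (g x)" for x
  proof (cases x)
    case None
    have "is_basis (2*d) d (spn d c) c" unfolding is_basis_alt using F.c_cvec ic by auto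
    then show ?thesis using None isoC by (auto simp: in_LG_def g_def)
  next
    case (Some z)
    let ?e = "\<lambda>j i. a j i + z * c j i"
    have b: "is_basis (2*d) d (spn d ?e) ?e" unfolding is_basis_alt
      using ecvec indep_az[OF ia int, of z] by auto
    have iso: "bform (2*d) om x y = 0" if xy: "x \<in> spn d ?e" "y \<in> spn d ?e" for x y
    proof -
      obtain p q where x: "x = lincomb d p ?e" and y: "y = lincomb d q ?e"
        using xy unfolding spn_def by blast
      show ?thesis unfolding x y bform_lincomb_left bform_lincomb_right
        by (auto intro!: sum.neutral simp: isoE)
    qed
    show ?thesis using Some b iso by (auto simp: in_LG_def g_def)
  qed
  show ?thesis unfolding LG_morphism_deg_def using grass LG by blast
qed

theorem mainTheorem4:
  fixes d :: nat and om :: "nat \<Rightarrow> nat \<Rightarrow> complex" and U V W :: "(nat \<Rightarrow> complex) set"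
  assumes "d \<ge> 1"
    and "symplectic_form (2*d) om"
    and "in_LG d om U" and "in_LG d om V" and "in_LG d om W"
    and "U \<inter> V = {\<lambda>_. 0}" and "U \<inter> W = {\<lambda>_. 0}" and "V \<inter> W = {\<lambda>_. 0}"
  shows "\<exists>!f. LG_morphism_deg d om f d \<and> f (Some 0) = U \<and> f (Some 1) = V \<and> f None = W"
proof -
  note d1 = assms(1)
  obtain u where u: "is_basis (2*d) d U u" using assms(3) unfolding in_LG_def by blast
  obtain w where w: "is_basis (2*d) d W w" using assms(5) unfolding in_LG_def by blast
  obtain v where v: "is_basis (2*d) d V v" using assms(4) unfolding in_LG_def by blast
  have isoU: "\<And>x y. x \<in> U \<Longrightarrow> y \<in> U \<Longrightarrow> bform (2*d) om x y = 0" using assms(3) unfolding in_LG_def by blast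
  have isoV: "\<And>x y. x \<in> V \<Longrightarrow> y \<in> V \<Longrightarrow> bform (2*d) om x y = 0" using assms(4) unfolding in_LG_def by blast
  have isoW: "\<And>x y. x \<in> W \<Longrightarrow> y \<in> W \<Longrightarrow> bform (2*d) om x y = 0" using assms(5) unfolding in_LG_def by blast
  have uc: "\<And>j. j < d \<Longrightarrow> u j \<in> cvec (2*d)" and U: "U = spn d u" and iu: "indep d u"
    using u unfolding is_basis_alt by auto
  have wc: "\<And>j. j < d \<Longrightarrow> w j \<in> cvec (2*d)" and W: "W = spn d w" and iw: "indep d w"
    using w unfolding is_basis_alt by auto
  have vc: "\<And>j. j < d \<Longrightarrow> v j \<in> cvec (2*d)" and V: "V = spn d v" and iv: "indep d v"
    using v unfolding is_basis_alt by auto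
  obtain R0 where fr0: "frame d u w R0"
    using frame_exists[OF uc wc iu iw] assms(7) U W by auto
  interpret F0: frame d u w R0 by (rule fr0)
  define a where "a j = lincomb d (\<lambda>r. F0.Xc v r j) u" for j
  define c where "c j = lincomb d (\<lambda>r. F0.Yc v r j) w" for j
  have vac: "v j = (\<lambda>i. a j i + c j i)" if "j < d" for j
    unfolding a_def c_def by (rule F0.XY_decomp[where b=v and j=j, OF vc[OF that]])
  have ac: "a j \<in> cvec (2*d)" if "j < d" for j unfolding a_def by (rule lincomb_cvec[OF uc])
  have cc: "c j \<in> cvec (2*d)" if "j < d" for j unfolding c_def by (rule lincomb_cvec[OF wc])
  have aU: "lincomb d x a \<in> U" for x unfolding U by (rule lincomb_in_spn_of) (simp add: a_def)
  have cW: "lincomb d x c \<in> W" for x unfolding W by (rule lincomb_in_spn_of) (simp add: c_def)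
  have lv: "lincomb d x v = (\<lambda>i. lincomb d x a i + lincomb d x c i)" for x
  proof -
    have "lincomb d x v = lincomb d x (\<lambda>j i. a j i + c j i)" by (rule lincomb_cong2) (simp add: vac)
    then show ?thesis by (simp add: lincomb_add_fam)
  qed
  have xV: "lincomb d x v \<in> V" for x unfolding V by (rule lincomb_in_spn)
  have ia: "indep d a" unfolding indep_def
  proof (intro allI impI)
    fix x j assume x: "lincomb d x a = (\<lambda>_. 0)" and j: "j < d"
    have e: "lincomb d x v = lincomb d x c" using lv x by simp
    have "lincomb d x v \<in> W" unfolding e by (rule cW)
    then have "lincomb d x v \<in> V \<inter> W" using xV[of x] by blast
    then have "lincomb d x v = (\<lambda>_. 0)" using assms(8) by auto
    then show "x j = 0" using iv j unfolding indep_def by blast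
  qed
  have ic: "indep d c" unfolding indep_def
  proof (intro allI impI)
    fix x j assume x: "lincomb d x c = (\<lambda>_. 0)" and j: "j < d"
    have e: "lincomb d x v = lincomb d x a" using lv x by simp
    have "lincomb d x v \<in> U" unfolding e by (rule aU)
    then have "lincomb d x v \<in> U \<inter> V" using xV[of x] by blast
    then have "lincomb d x v = (\<lambda>_. 0)" using assms(6) by auto
    then show "x j = 0" using iv j unfolding indep_def by blast
  qed
  have sa: "spn d a = U"
  proof -
    have aj: "a j = lincomb d (\<lambda>r. F0.Xc v r j) u" if "j < d" for j by (simp add: a_def)
    have "detn d (F0.Xc v) \<noteq> 0" using indep_detn[OF aj ia] .
    then show ?thesis using transform_spn_indep(1)[OF aj] U by simp
  qed
  have sc: "spn d c = W"
  proof -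
    have cj: "c j = lincomb d (\<lambda>r. F0.Yc v r j) w" if "j < d" for j by (simp add: c_def)
    have "detn d (F0.Yc v) \<noteq> 0" using indep_detn[OF cj ic] .
    then show ?thesis using transform_spn_indep(1)[OF cj] W by simp
  qed
  have sv: "spn d (\<lambda>j i. a j i + c j i) = V"
    unfolding V by (rule spn_cong) (simp add: vac)
  have int: "spn d a \<inter> spn d c = {\<lambda>_. 0}" using sa sc assms(7) by simp
  obtain R where fr: "frame d a c R" using frame_exists[OF ac cc ia ic int] by blast
  interpret F: frame d a c R by (rule fr)
  define g where "g = (\<lambda>x. case x of None \<Rightarrow> spn d c | Some z \<Rightarrow> spn d (\<lambda>j i. a j i + z * c j i))"
  have isoVj: "bform (2*d) om (\<lambda>i. a j i + c j i) (\<lambda>i. a j' i + c j' i) = 0" if "j < d" "j' < d" for j j'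
    using isoV vac that e_in_spn[of _ d v] V by metis
  have gLG: "LG_morphism_deg d om g d"
    by (rule existence[OF d1 fr ia ic int _ _ isoVj g_def])
      (use isoU isoW sa sc in auto)
  have g0: "g (Some 0) = U" using sa by (simp add: g_def)
  have g1: "g (Some 1) = V" using sv by (simp add: g_def)
  have gi: "g None = W" using sc by (simp add: g_def)
  have uniq: "f = g" if f: "LG_morphism_deg d om f d" "f (Some 0) = U" "f (Some 1) = V" "f None = W" for f
  proof -
    obtain P where Pdeg: "\<And>I. degree (P I) \<le> d"
      and Pb: "\<And>s t. (s, t) \<noteq> (0, 0) \<Longrightarrow> \<exists>b. is_basis (2*d) d (f (p1pt s t)) b \<and>
                    (\<forall>I\<in>psubsets d. plucker d b I = hom_eval d (P I) s t)"
      using f(1) unfolding LG_morphism_deg_def grass_morphism_deg_def by blast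
    define Bf where "Bf s t = (SOME b. is_basis (2*d) d (f (p1pt s t)) b \<and>
                    (\<forall>I\<in>psubsets d. plucker d b I = hom_eval d (P I) s t))" for s t
    have Bf: "is_basis (2*d) d (f (p1pt s t)) (Bf s t) \<and>
                    (\<forall>I\<in>psubsets d. plucker d (Bf s t) I = hom_eval d (P I) s t)"
      if "(s, t) \<noteq> (0, 0)" for s t
      unfolding Bf_def by (rule someI_ex[OF Pb[OF that]])
    have fB: "f (p1pt s t) = spn d (Bf s t)" if "(s, t) \<noteq> (0, 0)" for s t
      using Bf[OF that] unfolding is_basis_alt by blast
    have p10: "p1pt 1 z = Some z" for z by (simp add: p1pt_def)
    have p01: "p1pt 0 1 = None" by (simp add: p1pt_def)
    have uc_loc: "ucurve d a c R P Bf"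
    proof (unfold_locales)
      show "1 \<le> d" by (rule d1)
      show "degree (P I) \<le> d" for I by (rule Pdeg)
      show "Bf s t j \<in> cvec (2*d)" if "(s, t) \<noteq> (0, 0)" "j < d" for s t j
        using Bf[OF that(1)] that(2) unfolding is_basis_alt by blast
      show "indep d (Bf s t)" if "(s, t) \<noteq> (0, 0)" for s t
        using Bf[OF that] unfolding is_basis_alt by blast
      show "plucker d (Bf s t) I = hom_eval d (P I) s t" if "(s, t) \<noteq> (0, 0)" "I \<in> psubsets d" for s t I
        using Bf[OF that(1)] that(2) by blast
      show "Bf 1 0 j \<in> spn d a" if "j < d" for j
      proof -
        have "Bf 1 0 j \<in> spn d (Bf 1 0)" using that by (rule e_in_spn)
        also have "spn d (Bf 1 0) = f (p1pt 1 0)" using fB[of 1 0] by simp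
        also have "\<dots> = spn d a" using p10[of 0] f(2) sa by simp
        finally show ?thesis .
      qed
      show "Bf 0 1 j \<in> spn d c" if "j < d" for j
      proof -
        have "Bf 0 1 j \<in> spn d (Bf 0 1)" using that by (rule e_in_spn)
        also have "spn d (Bf 0 1) = f (p1pt 0 1)" using fB[of 0 1] by simp
        also have "\<dots> = spn d c" using p01 f(4) sc by simp
        finally show ?thesis .
      qed
      show "Bf 1 1 j \<in> spn d (\<lambda>j i. a j i + c j i)" if "j < d" for j
      proof -
        have "Bf 1 1 j \<in> spn d (Bf 1 1)" using that by (rule e_in_spn)
        also have "spn d (Bf 1 1) = f (p1pt 1 1)" using fB[of 1 1] by simp
        also have "\<dots> = spn d (\<lambda>j i. a j i + c j i)" using p10[of 1] f(3) sv by simp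
        finally show ?thesis .
      qed
    qed
    show "f = g"
    proof (rule ext)
      fix x show "f x = g x"
      proof (cases x)
        case None then show ?thesis using f(4) gi by simp
      next
        case (Some z)
        have "f (Some z) = spn d (Bf 1 z)" using fB[of 1 z] p10[of z] by simp
        also have "\<dots> = spn d (\<lambda>j i. a j i + z * c j i)" by (rule ucurve.uniq_span[OF uc_loc])
        also have "\<dots> = g (Some z)" by (simp add: g_def)
        finally show ?thesis using Some by simp
      qed
    qed
  qed
  show ?thesis
  proof (rule ex1I[of _ g])
    show "LG_morphism_deg d om g d \<and> g (Some 0) = U \<and> g (Some 1) = V \<and> g None = W"
      using gLG g0 g1 gi by blast
    show "\<And>f. LG_morphism_deg d om f d \<and> f (Some 0) = U \<and> f (Some 1) = V \<and> f None = W \<Longrightarrow> f = g"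
      using uniq by blast
  qed
qed

end
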